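(* Let $n\ge2$ and $1\le m,k\le n$. Then $\mathcal{H}_n(m,k)=\mathcal{L}_n(p,p,\ldots,p)$ ($k$ entries) where $0\le p\le n-1$, $p\equiv k-m-1 \pmod n$. Consequently the natural HNN extension $\widehat{H}_n(m,k)$ of $H_n(m,k)$ is isomorphic to the LOG group of the LOG $\Gamma(n;(a_{m-k+1})^k)$ (subscript mod $n$), i.e. the group with presentation \[\langle a_1,\ldots,a_n,t_0,\ldots,t_{k-1}\mid a_{i+1}=t_0^{-1}a_it_0\ (1\le i\le n,\ a_{n+1}=a_1),\ t_{j+1}=a_{m-k+1}^{-1}t_ja_{m-k+1}\ (0\le j\le k-1,\ t_k=a_1)\rangle.\]
   Context: $\mathcal{H}_n(m,k)=\langle x_1,\ldots,x_n\mid x_ix_{i+m}=x_{i+k}\ (1\le i\le n)\rangle$ (subscripts mod $n$) defines the group $H_n(m,k)$; this is the cyclic presentation $\mathcal{G}_n(x_1x_{1+m}x_{1+k}^{-1})$. For $0\le p_0,\ldots,p_{r-1}\le n-1$ and $p_r=-1$, $\mathcal{L}_n(p_0,\ldots,p_{r-1})$ denotes the cyclic presentation $\mathcal{G}_n\big((x_{p_0}x_{p_1+1}\cdots x_{p_{r-1}+(r-1)}x_{p_r+r})(x_{p_0+1}x_{p_1+2}\cdots x_{p_{r-1}+r})^{-1}\big)$, where $\mathcal{G}_n(w)=\langle x_1,\ldots,x_n\mid w,\theta(w),\ldots,\theta^{n-1}(w)\rangle$ with $\theta(x_i)=x_{i+1}$ (subscripts mod $n$). The natural HNN extension of a cyclically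 presented group $G_n(w)$ is $G_n(w)\rtimes_\phi\mathbb{Z}$ where $\phi(x_i)=x_{i+1}$. A LOG group is the group of a LOG presentation $\langle V\mid \tau(e)=\lambda(e)^{-1}\iota(e)\lambda(e)\ (e\in E)\rangle$ of a labelled oriented graph. *)

theory Defs
  imports "HOL-Algebra.Group"
begin

text \<open>A word over generators of type 'a is a list of letters (x, e);
  e = True means the letter x, e = False means the letter x^-1.\<close>

type_synonym 'a word = "('a \<times> bool) list"

definition words :: "'a set \<Rightarrow> 'a word set" where
  "words X = lists (X \<times> UNIV)"

definition inv_word :: "'a word \<Rightarrow> 'a word" where
  "inv_word w = rev (map (\<lambda>(x, e). (x, \<not> e)) w)"

definition pres_step :: "'a set \<Rightarrow> 'a word set \<Rightarrow> ('a word \<times> 'a word) set" where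
  "pres_step X R = {(a @ b, a @ s @ b) | a b s.
      a @ b \<in> words X \<and> s \<in> words X \<and>
      (s \<in> R \<or> (\<exists>x\<in>X. \<exists>e. s = [(x, e), (x, \<not> e)]))}"

definition pres_eq :: "'a set \<Rightarrow> 'a word set \<Rightarrow> ('a word \<times> 'a word) set" where
  "pres_eq X R = (pres_step X R \<union> (pres_step X R)\<inverse>)\<^sup>* \<inter> (words X \<times> words X)"

definition pres_group :: "'a set \<Rightarrow> 'a word set \<Rightarrow> 'a word set monoid" where
  "pres_group X R =
     \<lparr> carrier = words X // pres_eq X R,
       mult = (\<lambda>A B. \<Union>a\<in>A. \<Union>b\<in>B. pres_eq X R `` {a @ b}),
       one = pres_eq X R `` {[]} \<rparr>"

text \<open>Generators x_1,...,x_n are represented by 0,...,n-1 (subscripts mod n,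
  so x_n is represented by 0). idx n z is the representative of z mod n.\<close>

definition idx :: "nat \<Rightarrow> int \<Rightarrow> nat" where
  "idx n z = nat (z mod int n)"

definition shift_word :: "nat \<Rightarrow> int \<Rightarrow> nat word \<Rightarrow> nat word" where
  "shift_word n j w = map (\<lambda>(i, e). (idx n (int i + j), e)) w"

text \<open>G_n(w) = \<langle>x_1..x_n | w, \<theta>(w), ..., \<theta>^(n-1)(w)\<rangle>\<close>

definition cyc_group :: "nat \<Rightarrow> nat word \<Rightarrow> nat word set monoid" where
  "cyc_group n w = pres_group {..<n} {shift_word n (int j) w | j. j < n}"

definition H_word :: "nat \<Rightarrow> int \<Rightarrow> int \<Rightarrow> nat word" where
  "H_word n m k = [(idx n 1, True), (idx n (1 + m), True), (idx n (1 + k), False)]"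

definition H_group :: "nat \<Rightarrow> int \<Rightarrow> int \<Rightarrow> nat word set monoid" where
  "H_group n m k = cyc_group n (H_word n m k)"

text \<open>Relator of L_n(p_0,...,p_(r-1)) with p_r = -1:
  (x_(p_0) x_(p_1+1) ... x_(p_(r-1)+(r-1)) x_(p_r+r)) (x_(p_0+1) ... x_(p_(r-1)+r))^-1.\<close>

definition L_word :: "nat \<Rightarrow> int list \<Rightarrow> nat word" where
  "L_word n ps =
     (let r = length ps; q = ps @ [-1] in
      map (\<lambda>j. (idx n (q ! j + int j), True)) [0..<r+1]
      @ inv_word (map (\<lambda>j. (idx n (ps ! j + int j + 1), True)) [0..<r]))"

definition L_group :: "nat \<Rightarrow> int list \<Rightarrow> nat word set monoid" where
  "L_group n ps = cyc_group n (L_word n ps)"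

text \<open>Semidirect product G \<rtimes> Z for an action \<phi> :: int \<Rightarrow> (G \<Rightarrow> G)
  (\<phi> a = \<phi>^a), with multiplication (g,a)(h,b) = (g \<phi>^a(h), a+b).\<close>

definition semidirect_int :: "('g, 'm) monoid_scheme \<Rightarrow> (int \<Rightarrow> 'g \<Rightarrow> 'g) \<Rightarrow> ('g \<times> int) monoid" where
  "semidirect_int G \<phi> =
     \<lparr> carrier = carrier G \<times> UNIV,
       mult = (\<lambda>(g, a) (h, b). (g \<otimes>\<^bsub>G\<^esub> \<phi> a h, a + b)),
       one = (\<one>\<^bsub>G\<^esub>, 0) \<rparr>"

text \<open>The shift automorphism \<phi>(x_i) = x_(i+1), and its powers \<phi>^a,
  acting on elements (equivalence classes of words) of G_n(w).\<close>

definition cyc_shift :: "nat \<Rightarrow> nat word \<Rightarrow> int \<Rightarrow> nat word set \<Rightarrow> nat word set" where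
  "cyc_shift n w a A =
     (\<Union>v\<in>A. pres_eq {..<n} {shift_word n (int j) w | j. j < n} `` {shift_word n a v})"

definition cyc_hnn :: "nat \<Rightarrow> nat word \<Rightarrow> (nat word set \<times> int) monoid" where
  "cyc_hnn n w = semidirect_int (cyc_group n w) (cyc_shift n w)"

text \<open>LOG presentation \<langle>V | \<tau>(e) = \<lambda>(e)^-1 \<iota>(e) \<lambda>(e) (e \<in> E)\<rangle>,
  written with relators \<lambda>(e)^-1 \<iota>(e) \<lambda>(e) \<tau>(e)^-1.\<close>

definition LOG_group :: "'v set \<Rightarrow> 'e set \<Rightarrow> ('e \<Rightarrow> 'v) \<Rightarrow> ('e \<Rightarrow> 'v) \<Rightarrow> ('e \<Rightarrow> 'v)
    \<Rightarrow> 'v word set monoid" where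
  "LOG_group V E src tgt lab =
     pres_group V {[(lab e, False), (src e, True), (lab e, True), (tgt e, False)] | e. e \<in> E}"

text \<open>Vertices: a_i = Inl (i mod n) (i = 1..n) and
  t_j = Inr j (0 \<le> j \<le> k-1).  Edges: Inl i : a_i \<rightarrow> a_(i+1) labelled t_0,
  Inr j : t_j \<rightarrow> t_(j+1) labelled a_(m-k+1), with t_k = a_1.\<close>

definition Gamma_V :: "nat \<Rightarrow> nat \<Rightarrow> (nat + nat) set" where
  "Gamma_V n k = Inl ` {..<n} \<union> Inr ` {..<k}"

definition Gamma_E :: "nat \<Rightarrow> nat \<Rightarrow> (nat + nat) set" where
  "Gamma_E n k = Inl ` {..<n} \<union> Inr ` {..<k}"

definition Gamma_init :: "nat \<Rightarrow> nat + nat \<Rightarrow> nat + nat" where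
  "Gamma_init n e = (case e of Inl i \<Rightarrow> Inl i | Inr j \<Rightarrow> Inr j)"

definition Gamma_term :: "nat \<Rightarrow> nat \<Rightarrow> nat + nat \<Rightarrow> nat + nat" where
  "Gamma_term n k e = (case e of Inl i \<Rightarrow> Inl (idx n (int i + 1))
                         | Inr j \<Rightarrow> (if j + 1 < k then Inr (j + 1) else Inl (idx n 1)))"

definition Gamma_label :: "nat \<Rightarrow> int \<Rightarrow> int \<Rightarrow> nat + nat \<Rightarrow> nat + nat" where
  "Gamma_label n m k e = (case e of Inl i \<Rightarrow> Inr 0 | Inr j \<Rightarrow> Inl (idx n (m - k + 1)))"

definition Gamma_LOG_group :: "nat \<Rightarrow> int \<Rightarrow> nat \<Rightarrow> (nat + nat) word set monoid" where
  "Gamma_LOG_group n m k =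
     LOG_group (Gamma_V n k) (Gamma_E n k) (Gamma_init n) (Gamma_term n k) (Gamma_label n m (int k))"

end

theory Submission
  imports Defs
begin

lemma words_Nil[simp]: "[] \<in> words X" by (simp add: words_def)
lemma words_Cons[simp]: "(x # w) \<in> words X \<longleftrightarrow> fst x \<in> X \<and> w \<in> words X"
  by (cases x) (auto simp add: words_def)
lemma words_append[simp]: "(u @ v) \<in> words X \<longleftrightarrow> u \<in> words X \<and> v \<in> words X"
  by (simp add: words_def)

lemma step_words: "(u,v) \<in> pres_step X R \<Longrightarrow> u \<in> words X \<and> v \<in> words X"
  by (auto simp: pres_step_def)

lemma step_ctx:
  assumes "(u,v) \<in> pres_step X R" "c \<in> words X" "d \<in> words X"
  shows "(c@u@d, c@v@d) \<in> pres_step X R"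
proof -
  from assms(1) obtain a b s where u: "u = a@b" and v: "v = a@s@b" and
    w: "a@b \<in> words X" "s \<in> words X" "s \<in> R \<or> (\<exists>x\<in>X. \<exists>e. s = [(x, e), (x, \<not> e)])"
    by (auto simp: pres_step_def)
  show ?thesis unfolding pres_step_def
    apply (rule CollectI)
    apply (rule exI[of _ "c@a"], rule exI[of _ "b@d"], rule exI[of _ s])
    using u v w assms by auto
qed

abbreviation "Sy X R \<equiv> pres_step X R \<union> (pres_step X R)\<inverse>"

lemma Sy_ctx: "(u,v) \<in> (Sy X R)\<^sup>* \<Longrightarrow> c \<in> words X \<Longrightarrow> d \<in> words X \<Longrightarrow> (c@u@d, c@v@d) \<in> (Sy X R)\<^sup>*"
proof (induction rule: rtrancl_induct)
  case base then show ?case by simp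
next
  case (step y z)
  then have "(c@y@d, c@z@d) \<in> Sy X R" using step_ctx by blast
  then show ?case using step by (meson rtrancl.rtrancl_into_rtrancl)
qed

lemma pres_eq_words: "(u,v) \<in> pres_eq X R \<Longrightarrow> u \<in> words X \<and> v \<in> words X"
  by (simp add: pres_eq_def)

lemma pres_eq_refl: "w \<in> words X \<Longrightarrow> (w,w) \<in> pres_eq X R"
  by (simp add: pres_eq_def)

lemma pres_eq_sym: "(u,v) \<in> pres_eq X R \<Longrightarrow> (v,u) \<in> pres_eq X R"
proof -
  assume a: "(u,v) \<in> pres_eq X R"
  have "(u,v) \<in> (Sy X R)\<^sup>*" using a by (simp add: pres_eq_def)
  then have "(v,u) \<in> ((Sy X R)\<inverse>)\<^sup>*" by (simp add: rtrancl_converse)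
  moreover have "(Sy X R)\<inverse> = Sy X R" by auto
  ultimately show ?thesis using a by (simp add: pres_eq_def)
qed

lemma pres_eq_trans: "(u,v) \<in> pres_eq X R \<Longrightarrow> (v,w) \<in> pres_eq X R \<Longrightarrow> (u,w) \<in> pres_eq X R"
  by (auto simp: pres_eq_def)

lemma pres_eq_equiv: "equiv (words X) (pres_eq X R)"
  apply (rule equivI)
  subgoal using pres_eq_words by fast
  subgoal unfolding refl_on_def using pres_eq_words pres_eq_refl by fast
  subgoal unfolding sym_def using pres_eq_sym by blast
  subgoal unfolding trans_def using pres_eq_trans by blast
  done

lemma pres_eq_cong: "(u,v) \<in> pres_eq X R \<Longrightarrow> c \<in> words X \<Longrightarrow> d \<in> words X \<Longrightarrow> (c@u@d, c@v@d) \<in> pres_eq X R"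
  unfolding pres_eq_def using Sy_ctx by auto

lemma pres_eq_app: "(u,u') \<in> pres_eq X R \<Longrightarrow> (v,v') \<in> pres_eq X R \<Longrightarrow> (u@v, u'@v') \<in> pres_eq X R"
proof -
  assume a: "(u,u') \<in> pres_eq X R" "(v,v') \<in> pres_eq X R"
  have "(u@v, u'@v) \<in> pres_eq X R" using pres_eq_cong[OF a(1), of "[]" v] a pres_eq_words by auto
  moreover have "(u'@v, u'@v') \<in> pres_eq X R" using pres_eq_cong[OF a(2), of u' "[]"] a pres_eq_words by auto
  ultimately show ?thesis by (rule pres_eq_trans)
qed

lemma pres_eq_triv: "x \<in> X \<Longrightarrow> ([(x,e),(x,\<not>e)], []) \<in> pres_eq X R"
proof -
  assume x: "x \<in> X"
  have "([] @ [], [] @ [(x,e),(x,\<not>e)] @ []) \<in> pres_step X R"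
    unfolding pres_step_def
    by (rule CollectI, rule exI[of _ "[]"], rule exI[of _ "[]"], rule exI[of _ "[(x,e),(x,\<not>e)]"]) (use x in auto)
  then show ?thesis unfolding pres_eq_def using x by auto
qed

lemma pres_eq_rel: "r \<in> R \<Longrightarrow> r \<in> words X \<Longrightarrow> (r, []) \<in> pres_eq X R"
proof -
  assume r: "r \<in> R" "r \<in> words X"
  have "([] @ [], [] @ r @ []) \<in> pres_step X R"
    unfolding pres_step_def
    by (rule CollectI, rule exI[of _ "[]"], rule exI[of _ "[]"], rule exI[of _ r]) (use r in auto)
  then show ?thesis unfolding pres_eq_def using r by auto
qed

lemma inv_word_Nil[simp]: "inv_word [] = []" by (simp add: inv_word_def)
lemma inv_word_Cons[simp]: "inv_word ((x,e)#w) = inv_word w @ [(x,\<not>e)]" by (simp add: inv_word_def)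
lemma inv_word_app[simp]: "inv_word (u@v) = inv_word v @ inv_word u" by (simp add: inv_word_def)
lemma inv_word_inv_word[simp]: "inv_word (inv_word w) = w"
  by (induction w) (auto simp: inv_word_def)
lemma inv_word_words[simp]: "inv_word w \<in> words X \<longleftrightarrow> w \<in> words X"
  by (induction w) auto

lemma pres_eq_inv_r: "w \<in> words X \<Longrightarrow> (w @ inv_word w, []) \<in> pres_eq X R"
proof (induction w)
  case Nil then show ?case by (simp add: pres_eq_refl)
next
  case (Cons a w)
  obtain x e where a: "a = (x,e)" by (cases a)
  have x: "x \<in> X" "w \<in> words X" using Cons a by auto
  have "([(x,e)] @ (w @ inv_word w) @ [(x,\<not>e)], [(x,e)] @ [] @ [(x,\<not>e)]) \<in> pres_eq X R"
    using pres_eq_cong[OF Cons.IH[OF x(2)], of "[(x,e)]" "[(x,\<not>e)]"] x by simp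
  then have "((x,e) # w @ inv_word w @ [(x,\<not>e)], [(x,e),(x,\<not>e)]) \<in> pres_eq X R" by simp
  then show ?case using a pres_eq_trans pres_eq_triv[OF x(1)] by fastforce
qed

lemma pres_eq_inv_l: "w \<in> words X \<Longrightarrow> (inv_word w @ w, []) \<in> pres_eq X R"
  using pres_eq_inv_r[of "inv_word w" X R] by simp


definition cls :: "'a set \<Rightarrow> 'a word set \<Rightarrow> 'a word \<Rightarrow> 'a word set" where
  "cls X R w = pres_eq X R `` {w}"

definition gen :: "'a set \<Rightarrow> 'a word set \<Rightarrow> 'a \<Rightarrow> 'a word set" where
  "gen X R x = cls X R [(x,True)]"

lemma cls_eq_iff: "u \<in> words X \<Longrightarrow> v \<in> words X \<Longrightarrow> cls X R u = cls X R v \<longleftrightarrow> (u,v) \<in> pres_eq X R"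
  unfolding cls_def using eq_equiv_class_iff[OF pres_eq_equiv] by blast

lemma cls_eqI: "(u,v) \<in> pres_eq X R \<Longrightarrow> cls X R u = cls X R v"
  unfolding cls_def using equiv_class_eq[OF pres_eq_equiv] by blast

lemma pres_carrier: "carrier (pres_group X R) = cls X R ` words X"
  by (auto simp: pres_group_def quotient_def cls_def)

lemma pres_carrierE: "A \<in> carrier (pres_group X R) \<Longrightarrow> (\<And>w. w \<in> words X \<Longrightarrow> A = cls X R w \<Longrightarrow> P) \<Longrightarrow> P"
  using pres_carrier by blast

lemma cls_in_carrier[simp]: "w \<in> words X \<Longrightarrow> cls X R w \<in> carrier (pres_group X R)"
  using pres_carrier by blast

lemma pres_one: "\<one>\<^bsub>pres_group X R\<^esub> = cls X R []"
  by (simp add: pres_group_def cls_def)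

lemma pres_mult: "u \<in> words X \<Longrightarrow> v \<in> words X \<Longrightarrow> cls X R u \<otimes>\<^bsub>pres_group X R\<^esub> cls X R v = cls X R (u@v)"
proof -
  assume uv: "u \<in> words X" "v \<in> words X"
  have "(\<Union>a\<in>pres_eq X R `` {u}. \<Union>b\<in>pres_eq X R `` {v}. pres_eq X R `` {a @ b}) = pres_eq X R `` {u@v}"
  proof
    show "(\<Union>a\<in>pres_eq X R `` {u}. \<Union>b\<in>pres_eq X R `` {v}. pres_eq X R `` {a @ b}) \<subseteq> pres_eq X R `` {u@v}"
    proof clarify
      fix a b z assume "(u,a) \<in> pres_eq X R" "(v,b) \<in> pres_eq X R" "(a@b, z) \<in> pres_eq X R"
      then show "(u@v, z) \<in> pres_eq X R" using pres_eq_app pres_eq_trans by blast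
    qed
  next
    have "u \<in> pres_eq X R `` {u}" "v \<in> pres_eq X R `` {v}" using uv pres_eq_refl by auto
    then show "pres_eq X R `` {u@v} \<subseteq> (\<Union>a\<in>pres_eq X R `` {u}. \<Union>b\<in>pres_eq X R `` {v}. pres_eq X R `` {a @ b})"
      by blast
  qed
  then show ?thesis by (simp add: pres_group_def cls_def)
qed

lemma pres_group_is_group: "group (pres_group X R)"
proof (rule groupI)
  fix x y assume "x \<in> carrier (pres_group X R)" "y \<in> carrier (pres_group X R)"
  then show "x \<otimes>\<^bsub>pres_group X R\<^esub> y \<in> carrier (pres_group X R)"
    by (auto elim!: pres_carrierE simp: pres_mult)
next
  show "\<one>\<^bsub>pres_group X R\<^esub> \<in> carrier (pres_group X R)" by (simp add: pres_one)
next
  fix x y z assume "x \<in> carrier (pres_group X R)" "y \<in> carrier (pres_group X R)" "z \<in> carrier (pres_group X R)"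
  then show "x \<otimes>\<^bsub>pres_group X R\<^esub> y \<otimes>\<^bsub>pres_group X R\<^esub> z =
           x \<otimes>\<^bsub>pres_group X R\<^esub> (y \<otimes>\<^bsub>pres_group X R\<^esub> z)"
    by (auto elim!: pres_carrierE simp: pres_mult)
next
  fix x assume "x \<in> carrier (pres_group X R)"
  then show "\<one>\<^bsub>pres_group X R\<^esub> \<otimes>\<^bsub>pres_group X R\<^esub> x = x"
    by (auto elim!: pres_carrierE simp: pres_mult pres_one)
next
  fix x assume "x \<in> carrier (pres_group X R)"
  then obtain w where w: "w \<in> words X" "x = cls X R w" by (auto elim!: pres_carrierE)
  have "cls X R (inv_word w) \<otimes>\<^bsub>pres_group X R\<^esub> x = \<one>\<^bsub>pres_group X R\<^esub>"
    using w by (simp add: pres_mult pres_one cls_eqI pres_eq_inv_l)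
  then show "\<exists>y\<in>carrier (pres_group X R). y \<otimes>\<^bsub>pres_group X R\<^esub> x = \<one>\<^bsub>pres_group X R\<^esub>"
    using w by (intro bexI[of _ "cls X R (inv_word w)"]) auto
qed

fun ev :: "('g,'m) monoid_scheme \<Rightarrow> ('a \<Rightarrow> 'g) \<Rightarrow> 'a word \<Rightarrow> 'g" where
  "ev G f [] = \<one>\<^bsub>G\<^esub>"
| "ev G f ((x,e)#w) = (if e then f x else inv\<^bsub>G\<^esub> (f x)) \<otimes>\<^bsub>G\<^esub> ev G f w"

context group
begin

lemma ev_closed: "f ` X \<subseteq> carrier G \<Longrightarrow> w \<in> words X \<Longrightarrow> ev G f w \<in> carrier G"
  by (induction w) auto

lemma ev_append: "f ` X \<subseteq> carrier G \<Longrightarrow> u \<in> words X \<Longrightarrow> v \<in> words X \<Longrightarrow>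
   ev G f (u@v) = ev G f u \<otimes> ev G f v"
  by (induction u) (auto simp: m_assoc ev_closed image_subset_iff)

lemma ev_inv_word: "f ` X \<subseteq> carrier G \<Longrightarrow> w \<in> words X \<Longrightarrow>
   ev G f (inv_word w) = inv (ev G f w)"
proof (induction w)
  case Nil then show ?case by simp
next
  case (Cons a w)
  obtain x e where a: "a = (x,e)" by (cases a)
  have x: "x \<in> X" "w \<in> words X" using Cons a by auto
  have "ev G f (inv_word (a#w)) = ev G f (inv_word w) \<otimes> ev G f [(x,\<not>e)]"
    using a x Cons.prems by (simp add: ev_append[of f X])
  also have "\<dots> = inv (ev G f w) \<otimes> (if e then inv (f x) else f x)"
    using Cons x by (auto simp: image_subset_iff)
  also have "\<dots> = inv (ev G f (a#w))"
    using a x Cons.prems ev_closed[of f X w] by (auto simp add: inv_mult_group image_subset_iff)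
  finally show ?case .
qed

lemma ev_respects:
  assumes f: "f ` X \<subseteq> carrier G"
    and r: "\<And>r. r \<in> R \<Longrightarrow> r \<in> words X \<Longrightarrow> ev G f r = \<one>"
    and uv: "(u,v) \<in> pres_eq X R"
  shows "ev G f u = ev G f v"
proof -
  have st: "ev G f u = ev G f v" if "(u,v) \<in> pres_step X R" for u v
  proof -
    from that obtain a b s where u: "u = a@b" and v: "v = a@s@b" and
      w: "a@b \<in> words X" "s \<in> words X" "s \<in> R \<or> (\<exists>x\<in>X. \<exists>e. s = [(x, e), (x, \<not> e)])"
      by (auto simp: pres_step_def)
    have "ev G f s = \<one>" using w(3)
    proof
      assume "s \<in> R" then show ?thesis using r w(2) by auto
    next
      assume "\<exists>x\<in>X. \<exists>e. s = [(x, e), (x, \<not> e)]"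
      then show ?thesis using f by (auto simp: image_subset_iff)
    qed
    then show ?thesis using u v w ev_append[OF f] ev_closed[OF f] by simp
  qed
  have "(u,v) \<in> (Sy X R)\<^sup>*" using uv by (simp add: pres_eq_def)
  then show ?thesis
  proof (induction rule: rtrancl_induct)
    case base then show ?case by simp
  next
    case (step y z)
    then show ?case using st by (metis UnE converseD)
  qed
qed

end

definition phom :: "('g,'m) monoid_scheme \<Rightarrow> ('a \<Rightarrow> 'g) \<Rightarrow> 'a word set \<Rightarrow> 'g" where
  "phom G f A = ev G f (SOME w. w \<in> A)"

lemma phom_cls:
  assumes G: "group G" and f: "f ` X \<subseteq> carrier G"
    and r: "\<And>r. r \<in> R \<Longrightarrow> r \<in> words X \<Longrightarrow> ev G f r = \<one>\<^bsub>G\<^esub>"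
    and w: "w \<in> words X"
  shows "phom G f (cls X R w) = ev G f w"
proof -
  have "w \<in> cls X R w" using w by (simp add: cls_def pres_eq_refl)
  then have "(SOME w'. w' \<in> cls X R w) \<in> cls X R w" by (rule someI)
  then have "(w, SOME w'. w' \<in> cls X R w) \<in> pres_eq X R" by (simp add: cls_def)
  then show ?thesis unfolding phom_def using group.ev_respects[OF G f r] by metis
qed

lemma phom_hom:
  assumes G: "group G" and f: "f ` X \<subseteq> carrier G"
    and r: "\<And>r. r \<in> R \<Longrightarrow> r \<in> words X \<Longrightarrow> ev G f r = \<one>\<^bsub>G\<^esub>"
  shows "phom G f \<in> hom (pres_group X R) G"
proof (rule homI)
  fix A assume "A \<in> carrier (pres_group X R)"
  then show "phom G f A \<in> carrier G"
    by (auto elim!: pres_carrierE simp: phom_cls[OF G f r] group.ev_closed[OF G f])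
next
  fix A B assume "A \<in> carrier (pres_group X R)" "B \<in> carrier (pres_group X R)"
  then show "phom G f (A \<otimes>\<^bsub>pres_group X R\<^esub> B) = phom G f A \<otimes>\<^bsub>G\<^esub> phom G f B"
    by (auto elim!: pres_carrierE simp: pres_mult phom_cls[OF G f r] group.ev_append[OF G f])
qed

lemma gen_closed[simp]: "x \<in> X \<Longrightarrow> gen X R x \<in> carrier (pres_group X R)"
  by (simp add: gen_def)

lemma ev_hom:
  assumes G: "group G" and H: "group H" and h: "h \<in> hom G H"
    and f: "f ` X \<subseteq> carrier G" and w: "w \<in> words X"
  shows "h (ev G f w) = ev H (\<lambda>x. h (f x)) w"
  using w
proof (induction w)
  case Nil then show ?case using G H h by (simp add: hom_one)
next
  case (Cons a w)
  obtain x e where a: "a = (x,e)" by (cases a)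
  interpret gh: group_hom G H h using G H h by (simp add: group_hom_def group_hom_axioms_def)
  show ?case using Cons a f group.ev_closed[OF G f] by auto
qed

lemma cls_ev: "w \<in> words X \<Longrightarrow> cls X R w = ev (pres_group X R) (gen X R) w"
proof (induction w)
  case Nil then show ?case by (simp add: pres_one)
next
  case (Cons a w)
  obtain x e where a: "a = (x,e)" by (cases a)
  interpret P: group "pres_group X R" by (rule pres_group_is_group)
  have x: "x \<in> X" "w \<in> words X" using Cons a by auto
  have "cls X R (a#w) = cls X R [(x,e)] \<otimes>\<^bsub>pres_group X R\<^esub> cls X R w"
    using a x by (simp add: pres_mult)
  moreover have "cls X R [(x,e)] = (if e then gen X R x else inv\<^bsub>pres_group X R\<^esub> gen X R x)"
  proof (cases e)
    case True then show ?thesis by (simp add: gen_def)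
  next
    case False
    have "cls X R [(x,False)] \<otimes>\<^bsub>pres_group X R\<^esub> gen X R x = \<one>\<^bsub>pres_group X R\<^esub>"
      using x pres_eq_triv[of x X False R] by (simp add: gen_def pres_mult pres_one cls_eqI)
    then have "inv\<^bsub>pres_group X R\<^esub> gen X R x = cls X R [(x,False)]"
      using x by (intro P.inv_equality) auto
    then show ?thesis using False by simp
  qed
  ultimately show ?case using Cons x a by simp
qed

lemma ev_cong: "(\<And>x. x \<in> X \<Longrightarrow> f x = g x) \<Longrightarrow> w \<in> words X \<Longrightarrow> ev G f w = ev G g w"
  by (induction w) auto

lemma hom_cls:
  assumes G: "group G" and h: "h \<in> hom (pres_group X R) G" and w: "w \<in> words X"
  shows "h (cls X R w) = ev G (\<lambda>x. h (gen X R x)) w"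
proof -
  have "gen X R ` X \<subseteq> carrier (pres_group X R)" by auto
  then show ?thesis using cls_ev[OF w] ev_hom[OF pres_group_is_group G h _ w, of "gen X R"] by simp
qed

lemma hom_ext:
  assumes G: "group G" and h1: "h1 \<in> hom (pres_group X R) G" and h2: "h2 \<in> hom (pres_group X R) G"
    and eq: "\<And>x. x \<in> X \<Longrightarrow> h1 (gen X R x) = h2 (gen X R x)"
    and A: "A \<in> carrier (pres_group X R)"
  shows "h1 A = h2 A"
proof -
  obtain w where w: "w \<in> words X" "A = cls X R w" using A by (auto elim!: pres_carrierE)
  show ?thesis using w hom_cls[OF G h1] hom_cls[OF G h2] ev_cong[of X "\<lambda>x. h1 (gen X R x)" "\<lambda>x. h2 (gen X R x)", OF eq]
    by simp
qed

lemma rel_one: "r \<in> R \<Longrightarrow> r \<in> words X \<Longrightarrow> ev (pres_group X R) (gen X R) r = \<one>\<^bsub>pres_group X R\<^esub>"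
  using cls_ev[of r X R] cls_eqI[OF pres_eq_rel[of r R X]] by (simp add: pres_one)


lemma group_isos:
  assumes "f \<in> hom G H" "g \<in> hom H G" "\<And>x. x \<in> carrier G \<Longrightarrow> g (f x) = x"
    "\<And>y. y \<in> carrier H \<Longrightarrow> f (g y) = y"
  shows "G \<cong> H"
  using assms group_isomorphisms_imp_iso[of G H f g] is_isoI unfolding group_isomorphisms_def by blast

lemma words_UNIV[simp]: "w \<in> words UNIV" by (simp add: words_def)

lemma idx_lt: "0 < n \<Longrightarrow> idx n z < n"
  unfolding idx_def by (simp add: nat_less_iff)
lemma int_idx: "0 < n \<Longrightarrow> int (idx n z) = z mod int n"
  unfolding idx_def by simp
lemma idx_nat: "i < n \<Longrightarrow> idx n (int i) = i"
  unfolding idx_def by (simp add: nat_mod_as_int[symmetric])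

definition per :: "nat \<Rightarrow> (int \<Rightarrow> 'g) \<Rightarrow> bool" where
  "per n g \<longleftrightarrow> (\<forall>z. g (z mod int n) = g z)"

lemma per_idx: "0 < n \<Longrightarrow> per n g \<Longrightarrow> g (int (idx n z)) = g z"
  by (simp add: int_idx per_def)

lemma per_shift: "per n g \<Longrightarrow> per n (\<lambda>z. g (z + j))"
  unfolding per_def by (metis mod_add_left_eq)

lemma per_modI: "per n (\<lambda>z. g (z mod int n))"
  unfolding per_def by simp

lemma ev_shift: "0 < n \<Longrightarrow> per n g \<Longrightarrow>
  ev G (\<lambda>i. g (int i)) (shift_word n j w) = ev G (\<lambda>i. g (int i + j)) w"
proof (induction w)
  case Nil then show ?case by (simp add: shift_word_def)
next
  case (Cons a w)
  obtain x e where a: "a = (x,e)" by (cases a)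
  have "g (int (idx n (int x + j))) = g (int x + j)" using Cons.prems per_idx by blast
  then show ?case using Cons a by (simp add: shift_word_def)
qed

lemma shift_words: "0 < n \<Longrightarrow> shift_word n j w \<in> words {..<n}"
  by (induction w) (auto simp: shift_word_def idx_lt)

fun prodl :: "('g,'m) monoid_scheme \<Rightarrow> (nat \<Rightarrow> 'g) \<Rightarrow> nat \<Rightarrow> 'g" where
  "prodl G g 0 = \<one>\<^bsub>G\<^esub>"
| "prodl G g (Suc k) = prodl G g k \<otimes>\<^bsub>G\<^esub> g k"

context group
begin

lemma prodl_closed[simp]: "(\<And>r. g r \<in> carrier G) \<Longrightarrow> prodl G g k \<in> carrier G"
  by (induction k) auto

lemma ev_map_True: "(\<And>z. f z \<in> carrier G) \<Longrightarrow>
   ev G f (map (\<lambda>j. (h j, True)) [0..<k]) = prodl G (\<lambda>j. f (h j)) k"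
proof (induction k)
  case 0 then show ?case by simp
next
  case (Suc k)
  have fs: "f ` UNIV \<subseteq> carrier G" using Suc.prems by auto
  show ?case using Suc ev_append[OF fs] by simp
qed

lemma ev_H:
  assumes n: "0 < n" and g: "per n g" "\<And>z. g z \<in> carrier G"
  shows "ev G (\<lambda>i. g (int i)) (shift_word n j (H_word n m k)) =
    g (1 + j) \<otimes> g (1 + m + j) \<otimes> inv (g (1 + k + j))"
proof -
  have "ev G (\<lambda>i. g (int i)) (shift_word n j (H_word n m k)) = ev G (\<lambda>i. g (int i + j)) (H_word n m k)"
    by (rule ev_shift[OF n g(1)])
  also have "\<dots> = g (1 + j) \<otimes> (g (1 + m + j) \<otimes> inv (g (1 + k + j)))"
    using per_idx[OF n per_shift[OF g(1)], of _ j] g(2) by (simp add: H_word_def)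
  finally show ?thesis using g(2) by (simp add: m_assoc)
qed

lemma ev_L:
  assumes n: "0 < n" and g: "per n g" "\<And>z. g z \<in> carrier G"
  shows "ev G (\<lambda>i. g (int i)) (shift_word n j (L_word n (replicate k p))) =
    prodl G (\<lambda>r. g (p + int r + j)) k \<otimes> g (int k - 1 + j) \<otimes> inv (prodl G (\<lambda>r. g (p + int r + 1 + j)) k)"
proof -
  define gg where "gg = (\<lambda>z. g (z + j))"
  have gg: "per n gg" "\<And>z. gg z \<in> carrier G" using per_shift[OF g(1)] g(2) by (auto simp: gg_def)
  have fs: "(\<lambda>i. gg (int i)) ` UNIV \<subseteq> carrier G" using gg by auto
  have e1: "map (\<lambda>j. (idx n ((replicate k p @ [-1]) ! j + int j), True)) [0..<k+1] =
     map (\<lambda>j. (idx n (p + int j), True)) [0..<k] @ [(idx n (int k - 1), True)]"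
    by (auto simp: nth_append)
  have e2: "map (\<lambda>j. (idx n (replicate k p ! j + int j + 1), True)) [0..<k] =
      map (\<lambda>j. (idx n (p + int j + 1), True)) [0..<k]"
    by auto
  have "ev G (\<lambda>i. g (int i)) (shift_word n j (L_word n (replicate k p))) =
     ev G (\<lambda>i. gg (int i)) (L_word n (replicate k p))"
    unfolding gg_def by (rule ev_shift[OF n g(1)])
  also have "\<dots> = prodl G (\<lambda>r. gg (p + int r)) k \<otimes> gg (int k - 1) \<otimes> inv (prodl G (\<lambda>r. gg (p + int r + 1)) k)"
    unfolding L_word_def Let_def length_replicate e1 e2
    using gg ev_append[OF fs] ev_inv_word[OF fs] ev_map_True[of "\<lambda>i. gg (int i)"] per_idx[OF n gg(1)]
    by (simp add: m_assoc)
  finally show ?thesis unfolding gg_def by (simp add: add.commute add.left_commute)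
qed

end


abbreviation Rc :: "nat \<Rightarrow> nat word \<Rightarrow> nat word set" where
  "Rc n w \<equiv> {shift_word n (int j) w | j. j < n}"

definition cgen :: "nat \<Rightarrow> nat word \<Rightarrow> int \<Rightarrow> nat word set" where
  "cgen n w z = gen {..<n} (Rc n w) (idx n z)"

lemma cyc_group_eq: "cyc_group n w = pres_group {..<n} (Rc n w)"
  by (simp add: cyc_group_def)

lemma cyc_is_group: "group (cyc_group n w)"
  by (simp add: cyc_group_def pres_group_is_group)

lemma idx_mod[simp]: "idx n (z mod int n) = idx n z"
  by (simp add: idx_def)

lemma cgen_per: "per n (cgen n w)"
  by (simp add: per_def cgen_def)

lemma cgen_closed[simp]: "0 < n \<Longrightarrow> cgen n w z \<in> carrier (cyc_group n w)"
  by (simp add: cgen_def cyc_group_def idx_lt)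

lemma per_eq: "per n g \<Longrightarrow> z mod int n = z' mod int n \<Longrightarrow> g z = g z'"
  unfolding per_def by metis

lemma cyc_rel:
  assumes n: "0 < n"
  shows "ev (cyc_group n w) (\<lambda>i. cgen n w (int i)) (shift_word n j w) = \<one>\<^bsub>cyc_group n w\<^esub>"
proof -
  define j' where "j' = idx n j"
  have j': "j' < n" using idx_lt[OF n] by (simp add: j'_def)
  have r: "shift_word n (int j') w \<in> Rc n w" using j' by blast
  have "ev (cyc_group n w) (gen {..<n} (Rc n w)) (shift_word n (int j') w) = \<one>\<^bsub>cyc_group n w\<^esub>"
    using rel_one[OF r shift_words[OF n]] by (simp add: cyc_group_def)
  moreover have "ev (cyc_group n w) (gen {..<n} (Rc n w)) (shift_word n (int j') w) =
      ev (cyc_group n w) (\<lambda>i. cgen n w (int i)) (shift_word n (int j') w)"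
    by (rule ev_cong[OF _ shift_words[OF n]]) (simp add: cgen_def idx_nat)
  moreover have "ev (cyc_group n w) (\<lambda>i. cgen n w (int i)) (shift_word n (int j') w) =
      ev (cyc_group n w) (\<lambda>i. cgen n w (int i + int j')) w"
    by (rule ev_shift[OF n cgen_per])
  moreover have "ev (cyc_group n w) (\<lambda>i. cgen n w (int i)) (shift_word n j w) =
      ev (cyc_group n w) (\<lambda>i. cgen n w (int i + j)) w"
    by (rule ev_shift[OF n cgen_per])
  moreover have "(\<lambda>i. cgen n w (int i + int j')) = (\<lambda>i. cgen n w (int i + j))"
    using per_eq[OF cgen_per] int_idx[OF n] unfolding j'_def by (metis mod_add_right_eq)
  ultimately show ?thesis by simp
qed

lemma cyc_hom:
  assumes n: "0 < n" and G: "group G" and g: "per n g" "\<And>z. g z \<in> carrier G"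
    and r: "\<And>j. ev G (\<lambda>i. g (int i)) (shift_word n j w) = \<one>\<^bsub>G\<^esub>"
  shows "phom G (\<lambda>i. g (int i)) \<in> hom (cyc_group n w) G"
    "\<And>z. phom G (\<lambda>i. g (int i)) (cgen n w z) = g z"
proof -
  have f: "(\<lambda>i. g (int i)) ` {..<n} \<subseteq> carrier G" using g by auto
  have rr: "\<And>rr. rr \<in> Rc n w \<Longrightarrow> rr \<in> words {..<n} \<Longrightarrow> ev G (\<lambda>i. g (int i)) rr = \<one>\<^bsub>G\<^esub>"
    using r by blast
  show "phom G (\<lambda>i. g (int i)) \<in> hom (cyc_group n w) G"
    unfolding cyc_group_def by (rule phom_hom[OF G f rr])
  fix z
  have iz: "idx n z < n" by (rule idx_lt[OF n])
  have wz: "[(idx n z, True)] \<in> words {..<n}" using iz by (simp add: words_def)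
  have "phom G (\<lambda>i. g (int i)) (cgen n w z) = ev G (\<lambda>i. g (int i)) [(idx n z, True)]"
    unfolding cgen_def gen_def by (rule phom_cls[OF G f _ wz], rule rr) auto
  also have "\<dots> = g z" using g per_idx[OF n g(1)] by (simp add: monoid.r_one[OF group.is_monoid[OF G]])
  finally show "phom G (\<lambda>i. g (int i)) (cgen n w z) = g z" .
qed

lemma cyc_hom_ext:
  assumes n: "0 < n" and G: "group G" and h1: "h1 \<in> hom (cyc_group n w) G"
    and h2: "h2 \<in> hom (cyc_group n w) G"
    and eq: "\<And>z. h1 (cgen n w z) = h2 (cgen n w z)"
    and A: "A \<in> carrier (cyc_group n w)"
  shows "h1 A = h2 A"
proof -
  have "h1 (gen {..<n} (Rc n w) x) = h2 (gen {..<n} (Rc n w) x)" if x: "x \<in> {..<n}" for x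
  proof -
    have "cgen n w (int x) = gen {..<n} (Rc n w) x" using x by (simp add: cgen_def idx_nat)
    then show ?thesis using eq[of "int x"] by simp
  qed
  then show ?thesis
    using hom_ext[OF G h1[unfolded cyc_group_def] h2[unfolded cyc_group_def] _ A[unfolded cyc_group_def]]
    by blast
qed

lemma hom_id: "(\<lambda>x. x) \<in> hom G G"
  by (simp add: hom_def)

lemma cyc_iso:
  assumes n: "0 < n" and h: "h \<in> hom (cyc_group n w1) (cyc_group n w2)"
    and h': "h' \<in> hom (cyc_group n w2) (cyc_group n w1)"
    and e1: "\<And>z. h' (h (cgen n w1 z)) = cgen n w1 z"
    and e2: "\<And>z. h (h' (cgen n w2 z)) = cgen n w2 z"
  shows "cyc_group n w1 \<cong> cyc_group n w2"
proof (rule group_isos[OF h h'])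
  fix x assume x: "x \<in> carrier (cyc_group n w1)"
  have c: "h' \<circ> h \<in> hom (cyc_group n w1) (cyc_group n w1)" using h h' by (rule hom_compose)
  show "h' (h x) = x" using cyc_hom_ext[OF n cyc_is_group c hom_id _ x] e1 by simp
next
  fix x assume x: "x \<in> carrier (cyc_group n w2)"
  have c: "h \<circ> h' \<in> hom (cyc_group n w2) (cyc_group n w2)" using h' h by (rule hom_compose)
  show "h (h' x) = x" using cyc_hom_ext[OF n cyc_is_group c hom_id _ x] e2 by simp
qed

lemma hom_prodl:
  assumes G: "group G" and H: "group H" and h: "h \<in> hom G H" and f: "\<And>r. f r \<in> carrier G"
  shows "h (prodl G f k) = prodl H (\<lambda>r. h (f r)) k"
proof -
  interpret gh: group_hom G H h using G H h by (simp add: group_hom_def group_hom_axioms_def)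
  show ?thesis by (induction k) (auto simp: f group.prodl_closed[OF G])
qed

context group
begin

lemma telescope:
  assumes g: "\<And>z. g z \<in> carrier G"
  shows "prodl G (\<lambda>r. inv (g (c + int r)) \<otimes> g (c + int r + 1)) k = inv (g c) \<otimes> g (c + int k)"
proof (induction k)
  case 0 then show ?case using g by simp
next
  case (Suc k)
  have "prodl G (\<lambda>r. inv (g (c + int r)) \<otimes> g (c + int r + 1)) (Suc k) =
     inv (g c) \<otimes> g (c + int k) \<otimes> (inv (g (c + int k)) \<otimes> g (c + int k + 1))"
    using Suc by simp
  also have "\<dots> = inv (g c) \<otimes> g (c + int (Suc k))"
    using g by (simp add: m_assoc[symmetric]) (simp add: m_assoc add.assoc add.commute[of 1])
  finally show ?case .
qed

end


lemma mod_helper: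
  fixes m :: int and k p n :: nat
  assumes hp: "int p mod int n = (int k - m - 1) mod int n"
    and "c = int p + t" and "int k - m - 1 + t = d"
  shows "c mod int n = d mod int n"
  using assms by (metis mod_add_left_eq)

context group
begin

lemma prodl_cong: "(\<And>r. r < k \<Longrightarrow> f r = g r) \<Longrightarrow> prodl G f k = prodl G g k"
  by (induction k) auto

lemma algH:
  fixes V :: "int \<Rightarrow> 'a" and m :: int and k p n :: nat
  assumes n: "0 < n" and hp: "int p mod int n = (int k - m - 1) mod int n"
    and Vc: "\<And>z. V z \<in> carrier G" and Vp: "per n V"
    and rel: "\<And>a. V a \<otimes> V (a + m) = V (a + int k)"
  shows "prodl G (\<lambda>r. inv (V (int p + int r + j - int k + 1)) \<otimes> V (int p + int r + j - int k + 2)) k = V j"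
    "prodl G (\<lambda>r. inv (V (int p + int r + j - int k + 1)) \<otimes> V (int p + int r + j - int k + 2)) k
       \<otimes> (inv (V (int k - 1 + j - int k + 1)) \<otimes> V (int k - 1 + j - int k + 2))
       \<otimes> inv (prodl G (\<lambda>r. inv (V (int p + int r + 1 + j - int k + 1)) \<otimes> V (int p + int r + 1 + j - int k + 2)) k)
     = \<one>"
proof -
  have D1: "inv (V a) \<otimes> V (a + int k) = V (a + m)" for a
    using rel[of a] Vc by (metis inv_solve_left)
  have pw: "prodl G (\<lambda>r. inv (V (int p + int r + j - int k + 1)) \<otimes> V (int p + int r + j - int k + 2)) k = V j" for j
  proof -
    define c where "c = int p + j - int k + 1"
    have "prodl G (\<lambda>r. inv (V (int p + int r + j - int k + 1)) \<otimes> V (int p + int r + j - int k + 2)) k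
        = prodl G (\<lambda>r. inv (V (c + int r)) \<otimes> V (c + int r + 1)) k"
      by (rule prodl_cong) (simp add: c_def algebra_simps)
    also have "\<dots> = inv (V c) \<otimes> V (c + int k)" by (rule telescope[OF Vc])
    also have "V c = V (j - m)"
      by (rule per_eq[OF Vp], rule mod_helper[OF hp, of _ "j - int k + 1"]) (simp_all add: c_def)
    also have "V (c + int k) = V (j - m + int k)"
      by (rule per_eq[OF Vp], rule mod_helper[OF hp, of _ "j + 1"]) (simp_all add: c_def)
    also have "inv (V (j - m)) \<otimes> V (j - m + int k) = V j" using D1[of "j - m"] by simp
    finally show ?thesis .
  qed
  show "prodl G (\<lambda>r. inv (V (int p + int r + j - int k + 1)) \<otimes> V (int p + int r + j - int k + 2)) k = V j"
    by (rule pw)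
  have pw1: "prodl G (\<lambda>r. inv (V (int p + int r + 1 + j - int k + 1)) \<otimes> V (int p + int r + 1 + j - int k + 2)) k = V (j + 1)"
    using pw[of "j+1"] by (simp add: algebra_simps)
  have e: "int k - 1 + j - int k + 1 = j" "int k - 1 + j - int k + 2 = j + 1" by simp_all
  show "prodl G (\<lambda>r. inv (V (int p + int r + j - int k + 1)) \<otimes> V (int p + int r + j - int k + 2)) k
       \<otimes> (inv (V (int k - 1 + j - int k + 1)) \<otimes> V (int k - 1 + j - int k + 2))
       \<otimes> inv (prodl G (\<lambda>r. inv (V (int p + int r + 1 + j - int k + 1)) \<otimes> V (int p + int r + 1 + j - int k + 2)) k)
     = \<one>"
    unfolding pw pw1 e using Vc by (simp add: m_assoc[symmetric])
qed

lemma algL: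
  fixes Y :: "int \<Rightarrow> 'a" and m :: int and k p n :: nat
  assumes n: "0 < n" and hp: "int p mod int n = (int k - m - 1) mod int n"
    and Yc: "\<And>z. Y z \<in> carrier G" and Yp: "per n Y"
    and rel: "\<And>j. prodl G (\<lambda>r. Y (int p + int r + j)) k \<otimes> Y (int k - 1 + j)
                 \<otimes> inv (prodl G (\<lambda>r. Y (int p + int r + 1 + j)) k) = \<one>"
  defines "U \<equiv> \<lambda>z. prodl G (\<lambda>r. Y (int p + int r + z)) k"
  shows "per n U" "\<And>z. U z \<in> carrier G"
    "\<And>z. inv (U (z - int k + 1)) \<otimes> U (z - int k + 2) = Y z"
    "\<And>j. U (1 + j) \<otimes> U (1 + m + j) \<otimes> inv (U (1 + int k + j)) = \<one>"
proof -
  show Up: "per n U" unfolding per_def U_def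
  proof
    fix z
    show "prodl G (\<lambda>r. Y (int p + int r + z mod int n)) k = prodl G (\<lambda>r. Y (int p + int r + z)) k"
      by (rule prodl_cong, rule per_eq[OF Yp]) (simp add: mod_simps)
  qed
  show Uc: "\<And>z. U z \<in> carrier G" unfolding U_def using Yc by simp
  have R: "U j \<otimes> Y (int k - 1 + j) = U (j + 1)" for j
  proof -
    have "U (j + 1) = prodl G (\<lambda>r. Y (int p + int r + 1 + j)) k"
      unfolding U_def by (rule prodl_cong) (simp add: algebra_simps)
    then have "U j \<otimes> Y (int k - 1 + j) \<otimes> inv (U (j + 1)) = \<one>" using rel[of j] by (simp add: U_def)
    then have "U j \<otimes> Y (int k - 1 + j) = \<one> \<otimes> U (j + 1)"
      using inv_solve_right'[of "\<one>" "U j \<otimes> Y (int k - 1 + j)" "U (j + 1)"] Uc Yc by simp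
    then show ?thesis using Uc by simp
  qed
  show D2: "inv (U (z - int k + 1)) \<otimes> U (z - int k + 2) = Y z" for z
  proof -
    have "U (z - int k + 1) \<otimes> Y z = U (z - int k + 2)" using R[of "z - int k + 1"] by (simp add: algebra_simps)
    then show ?thesis using Uc Yc by (metis inv_solve_left)
  qed
  have UU: "U a = inv (U (a - m)) \<otimes> U (a - m + int k)" for a
  proof -
    define c where "c = int p + a - int k + 1"
    have "U a = prodl G (\<lambda>r. Y (int p + int r + a)) k" by (simp add: U_def)
    also have "\<dots> = prodl G (\<lambda>r. inv (U (int p + int r + a - int k + 1)) \<otimes> U (int p + int r + a - int k + 2)) k"
      by (rule prodl_cong, rule D2[symmetric])
    also have "\<dots> = prodl G (\<lambda>r. inv (U (c + int r)) \<otimes> U (c + int r + 1)) k"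
      by (rule prodl_cong) (simp add: c_def algebra_simps)
    also have "\<dots> = inv (U c) \<otimes> U (c + int k)" by (rule telescope[OF Uc])
    also have "U c = U (a - m)"
      by (rule per_eq[OF Up], rule mod_helper[OF hp, of _ "a - int k + 1"]) (simp_all add: c_def)
    also have "U (c + int k) = U (a - m + int k)"
      by (rule per_eq[OF Up], rule mod_helper[OF hp, of _ "a + 1"]) (simp_all add: c_def)
    finally show ?thesis .
  qed
  show "U (1 + j) \<otimes> U (1 + m + j) \<otimes> inv (U (1 + int k + j)) = \<one>" for j
  proof -
    have "U (1 + m + j) = inv (U (1 + j)) \<otimes> U (1 + j + int k)" using UU[of "1 + m + j"] by (simp add: algebra_simps)
    then show ?thesis using Uc by (simp add: m_assoc[symmetric] algebra_simps)
  qed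
qed

end


lemma part1:
  fixes n k p :: nat and m :: int
  assumes n: "0 < n" and hp: "int p mod int n = (int k - m - 1) mod int n"
  shows "cyc_group n (H_word n m (int k)) \<cong> cyc_group n (L_word n (replicate k (int p)))"
proof -
  define wH where "wH = H_word n m (int k)"
  define wL where "wL = L_word n (replicate k (int p))"
  let ?GH = "cyc_group n wH" and ?GL = "cyc_group n wL"
  interpret GH: group ?GH by (rule cyc_is_group)
  interpret GL: group ?GL by (rule cyc_is_group)
  define V where "V = cgen n wH"
  define Y where "Y = cgen n wL"
  have Vc: "\<And>z. V z \<in> carrier ?GH" and Vp: "per n V" using n by (auto simp: V_def cgen_per)
  have Yc: "\<And>z. Y z \<in> carrier ?GL" and Yp: "per n Y" using n by (auto simp: Y_def cgen_per)
  have relH: "V a \<otimes>\<^bsub>?GH\<^esub> V (a + m) = V (a + int k)" for a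
  proof -
    have "V (1 + (a - 1)) \<otimes>\<^bsub>?GH\<^esub> V (1 + m + (a - 1)) \<otimes>\<^bsub>?GH\<^esub> inv\<^bsub>?GH\<^esub> (V (1 + int k + (a - 1))) = \<one>\<^bsub>?GH\<^esub>"
      using cyc_rel[OF n, of wH "a - 1"] GH.ev_H[OF n Vp Vc, of "a - 1" m "int k"] unfolding V_def wH_def by simp
    then have "V a \<otimes>\<^bsub>?GH\<^esub> V (a + m) \<otimes>\<^bsub>?GH\<^esub> inv\<^bsub>?GH\<^esub> (V (a + int k)) = \<one>\<^bsub>?GH\<^esub>"
      by (simp add: algebra_simps)
    then show ?thesis using GH.inv_solve_right'[of "\<one>\<^bsub>?GH\<^esub>" "V a \<otimes>\<^bsub>?GH\<^esub> V (a + m)" "V (a + int k)"] Vc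
      by simp
  qed
  have relL: "prodl ?GL (\<lambda>r. Y (int p + int r + j)) k \<otimes>\<^bsub>?GL\<^esub> Y (int k - 1 + j)
      \<otimes>\<^bsub>?GL\<^esub> inv\<^bsub>?GL\<^esub> (prodl ?GL (\<lambda>r. Y (int p + int r + 1 + j)) k) = \<one>\<^bsub>?GL\<^esub>" for j
    using cyc_rel[OF n, of wL j] GL.ev_L[OF n Yp Yc, of j k "int p"] unfolding Y_def wL_def by simp
  define U where "U = (\<lambda>z. prodl ?GL (\<lambda>r. Y (int p + int r + z)) k)"
  note L0 = GL.algL[OF n hp Yc Yp relL]
  have L: "per n U" "\<And>z. U z \<in> carrier ?GL"
    "\<And>z. inv\<^bsub>?GL\<^esub> (U (z - int k + 1)) \<otimes>\<^bsub>?GL\<^esub> U (z - int k + 2) = Y z"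
    "\<And>j. U (1 + j) \<otimes>\<^bsub>?GL\<^esub> U (1 + m + j) \<otimes>\<^bsub>?GL\<^esub> inv\<^bsub>?GL\<^esub> (U (1 + int k + j)) = \<one>\<^bsub>?GL\<^esub>"
    unfolding U_def using L0 by auto
  define W where "W = (\<lambda>z. inv\<^bsub>?GH\<^esub> (V (z - int k + 1)) \<otimes>\<^bsub>?GH\<^esub> V (z - int k + 2))"
  note H = GH.algH[OF n hp Vc Vp relH]
  have Wc: "\<And>z. W z \<in> carrier ?GH" using Vc by (simp add: W_def)
  have Wp: "per n W" unfolding per_def W_def
  proof
    fix z
    have "V (z mod int n - int k + 1) = V (z - int k + 1)"
      by (rule per_eq[OF Vp]) (metis mod_add_left_eq mod_diff_left_eq)
    moreover have "V (z mod int n - int k + 2) = V (z - int k + 2)"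
      by (rule per_eq[OF Vp]) (metis mod_add_left_eq mod_diff_left_eq)
    ultimately
    show "inv\<^bsub>?GH\<^esub> V (z mod int n - int k + 1) \<otimes>\<^bsub>?GH\<^esub> V (z mod int n - int k + 2) =
        inv\<^bsub>?GH\<^esub> V (z - int k + 1) \<otimes>\<^bsub>?GH\<^esub> V (z - int k + 2)" by simp
  qed
  have hh: "phom ?GL (\<lambda>i. U (int i)) \<in> hom ?GH ?GL" "\<And>z. phom ?GL (\<lambda>i. U (int i)) (cgen n wH z) = U z"
  proof -
    have r: "ev ?GL (\<lambda>i. U (int i)) (shift_word n j wH) = \<one>\<^bsub>?GL\<^esub>" for j
      using GL.ev_H[OF n L(1) L(2), of j m "int k"] L(4)[of j] unfolding wH_def by simp
    show "phom ?GL (\<lambda>i. U (int i)) \<in> hom ?GH ?GL" "\<And>z. phom ?GL (\<lambda>i. U (int i)) (cgen n wH z) = U z"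
      using cyc_hom[OF n GL.is_group L(1) L(2) r] by auto
  qed
  have hh': "phom ?GH (\<lambda>i. W (int i)) \<in> hom ?GL ?GH" "\<And>z. phom ?GH (\<lambda>i. W (int i)) (cgen n wL z) = W z"
  proof -
    have r: "ev ?GH (\<lambda>i. W (int i)) (shift_word n j wL) = \<one>\<^bsub>?GH\<^esub>" for j
      using GH.ev_L[OF n Wp Wc, of j k "int p"] H(2)[of j] unfolding wL_def W_def by simp
    show "phom ?GH (\<lambda>i. W (int i)) \<in> hom ?GL ?GH" "\<And>z. phom ?GH (\<lambda>i. W (int i)) (cgen n wL z) = W z"
      using cyc_hom[OF n GH.is_group Wp Wc r] by auto
  qed
  define h where "h = phom ?GL (\<lambda>i. U (int i))"
  define h' where "h' = phom ?GH (\<lambda>i. W (int i))"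
  have h: "h \<in> hom ?GH ?GL" "\<And>z. h (V z) = U z" using hh unfolding h_def V_def by auto
  have h': "h' \<in> hom ?GL ?GH" "\<And>z. h' (Y z) = W z" using hh' unfolding h'_def Y_def by auto
  interpret hg: group_hom ?GH ?GL h using h(1) by (simp add: group_hom_def group_hom_axioms_def)
  interpret hg': group_hom ?GL ?GH h' using h'(1) by (simp add: group_hom_def group_hom_axioms_def)
  show ?thesis unfolding wH_def[symmetric] wL_def[symmetric]
  proof (rule cyc_iso[OF n h(1) h'(1)])
    fix z
    have "h' (h (V z)) = h' (U z)" by (simp add: h)
    also have "\<dots> = prodl ?GH (\<lambda>r. h' (Y (int p + int r + z))) k"
      unfolding U_def by (rule hom_prodl[OF GL.is_group GH.is_group h'(1) Yc])
    also have "\<dots> = V z" using H(1)[of z] by (simp add: h' W_def)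
    finally show "h' (h (cgen n wH z)) = cgen n wH z" by (simp add: V_def)
  next
    fix z
    have "h (h' (Y z)) = h (W z)" by (simp add: h')
    also have "\<dots> = Y z" using L(3)[of z] Vc by (simp add: W_def h)
    finally show "h (h' (cgen n wL z)) = cgen n wL z" by (simp add: Y_def)
  qed
qed


definition cj :: "('g,'m) monoid_scheme \<Rightarrow> 'g \<Rightarrow> 'g \<Rightarrow> 'g" where
  "cj G c x = inv\<^bsub>G\<^esub> c \<otimes>\<^bsub>G\<^esub> x \<otimes>\<^bsub>G\<^esub> c"

context group
begin

lemma cancel1[simp]: "c \<in> carrier G \<Longrightarrow> z \<in> carrier G \<Longrightarrow> c \<otimes> (inv c \<otimes> z) = z"
  by (simp add: m_assoc[symmetric])
lemma cancel2[simp]: "c \<in> carrier G \<Longrightarrow> z \<in> carrier G \<Longrightarrow> inv c \<otimes> (c \<otimes> z) = z"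
  by (simp add: m_assoc[symmetric])

lemma cj_closed[simp]: "c \<in> carrier G \<Longrightarrow> x \<in> carrier G \<Longrightarrow> cj G c x \<in> carrier G"
  by (simp add: cj_def)

lemma cj_mult: "c \<in> carrier G \<Longrightarrow> x \<in> carrier G \<Longrightarrow> y \<in> carrier G \<Longrightarrow>
   cj G c (x \<otimes> y) = cj G c x \<otimes> cj G c y"
  by (simp add: cj_def m_assoc)

lemma cj_hom: "c \<in> carrier G \<Longrightarrow> cj G c \<in> hom G G"
  by (rule homI) (simp_all add: cj_mult)

lemma cj_inv: "c \<in> carrier G \<Longrightarrow> x \<in> carrier G \<Longrightarrow> cj G c (inv x) = inv (cj G c x)"
  by (simp add: cj_def m_assoc inv_mult_group)

lemma cj_pow: "c \<in> carrier G \<Longrightarrow> x \<in> carrier G \<Longrightarrow> cj G c (x [^] (r::nat)) = cj G c x [^] r"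
  by (induction r) (simp_all add: cj_mult, simp add: cj_def)

lemma cj_cj: "c \<in> carrier G \<Longrightarrow> d \<in> carrier G \<Longrightarrow> x \<in> carrier G \<Longrightarrow>
   cj G c (cj G d x) = cj G (d \<otimes> c) x"
  by (simp add: cj_def m_assoc inv_mult_group)

lemma cj_one[simp]: "x \<in> carrier G \<Longrightarrow> cj G \<one> x = x"
  by (simp add: cj_def)

lemma cj_self[simp]: "c \<in> carrier G \<Longrightarrow> cj G c c = c"
  by (simp add: cj_def)

lemma cj_iff: "c \<in> carrier G \<Longrightarrow> x \<in> carrier G \<Longrightarrow> y \<in> carrier G \<Longrightarrow>
   cj G c x = y \<longleftrightarrow> x \<otimes> c = c \<otimes> y"
proof -
  assume cxy: "c \<in> carrier G" "x \<in> carrier G" "y \<in> carrier G"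
  have "cj G c x = y \<longleftrightarrow> inv c \<otimes> (x \<otimes> c) = y" using cxy by (simp add: cj_def m_assoc)
  also have "\<dots> \<longleftrightarrow> x \<otimes> c = c \<otimes> y" using cxy inv_solve_left' by auto
  finally show ?thesis .
qed

lemma cj_cj2: "d \<in> carrier G \<Longrightarrow> y \<in> carrier G \<Longrightarrow> x \<in> carrier G \<Longrightarrow>
   cj G (cj G d y) x = cj G d (cj G y (cj G (inv d) x))"
  by (simp add: cj_cj) (simp add: cj_def m_assoc)

lemma cj_dist: "e \<in> carrier G \<Longrightarrow> d \<in> carrier G \<Longrightarrow> x \<in> carrier G \<Longrightarrow>
   cj G e (cj G d x) = cj G (cj G e d) (cj G e x)"
  by (simp add: cj_def m_assoc inv_mult_group)

lemma cj_inv_cancel: "c \<in> carrier G \<Longrightarrow> x \<in> carrier G \<Longrightarrow> cj G (inv c) (cj G c x) = x"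
  by (simp add: cj_cj)

lemma cj_shift_nat:
  assumes T: "T \<in> carrier G" and f: "\<And>j. f j \<in> carrier G" and s: "\<And>j. cj G T (f j) = f (j + 1)"
  shows "cj G (T [^] (r::nat)) (f j) = f (j + int r)"
proof (induction r)
  case 0 then show ?case using f by simp
next
  case (Suc r)
  have "cj G (T [^] Suc r) (f j) = cj G T (cj G (T [^] r) (f j))" using T f by (simp add: cj_cj)
  also have "\<dots> = f (j + int r + 1)" using Suc s by simp
  finally show ?case by (simp add: ac_simps)
qed

lemma cj_shift_int:
  assumes T: "T \<in> carrier G" and f: "\<And>j. f j \<in> carrier G" and s: "\<And>j. cj G T (f j) = f (j + 1)"
  shows "cj G (T [^] (z::int)) (f j) = f (j + z)"
proof (cases "z \<ge> 0")
  case True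
  then obtain r where "z = int r" by (metis nonneg_eq_int)
  then show ?thesis using cj_shift_nat[where f=f, OF T f s] by (simp add: int_pow_int)
next
  case False
  then obtain r where z: "z = - int r" by (metis nonpos_int_cases linorder_linear)
  have "f j = cj G (T [^] r) (f (j - int r))" using cj_shift_nat[where f=f and r=r and j="j - int r", OF T f s] by simp
  then have "cj G (inv (T [^] r)) (f j) = f (j - int r)" using T f by (simp add: cj_inv_cancel)
  then show ?thesis using z T by (simp add: int_pow_neg int_pow_int)
qed

lemma ev_log_rel:
  assumes "f l \<in> carrier G" "f s \<in> carrier G" "f tg \<in> carrier G"
  shows "ev G f [(l,False),(s,True),(l,True),(tg,False)] = \<one> \<longleftrightarrow> cj G (f l) (f s) = f tg"
proof -
  have "ev G f [(l,False),(s,True),(l,True),(tg,False)] = cj G (f l) (f s) \<otimes> inv (f tg)"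
    using assms by (simp add: cj_def m_assoc)
  also have "\<dots> = \<one> \<longleftrightarrow> cj G (f l) (f s) = \<one> \<otimes> f tg"
    using assms inv_solve_right'[of "\<one>" "cj G (f l) (f s)" "f tg"] by simp
  finally show ?thesis using assms by simp
qed

end

lemma semidirect_group:
  assumes G: "group G"
    and hom: "\<And>a. \<phi> a \<in> hom G G"
    and one: "\<And>a. \<phi> a \<one>\<^bsub>G\<^esub> = \<one>\<^bsub>G\<^esub>"
    and comp: "\<And>a b x. x \<in> carrier G \<Longrightarrow> \<phi> a (\<phi> b x) = \<phi> (a + b) x"
    and zero: "\<And>x. x \<in> carrier G \<Longrightarrow> \<phi> 0 x = x"
  shows "group (semidirect_int G \<phi>)"
proof -
  interpret G: group G by (rule G)
  have cl: "\<And>a x. x \<in> carrier G \<Longrightarrow> \<phi> a x \<in> carrier G" using hom by (auto simp: hom_def)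
  have hm: "\<And>a x y. x \<in> carrier G \<Longrightarrow> y \<in> carrier G \<Longrightarrow> \<phi> a (x \<otimes>\<^bsub>G\<^esub> y) = \<phi> a x \<otimes>\<^bsub>G\<^esub> \<phi> a y"
    using hom by (auto simp: hom_def)
  show ?thesis
  proof (rule groupI)
    fix x y assume "x \<in> carrier (semidirect_int G \<phi>)" "y \<in> carrier (semidirect_int G \<phi>)"
    then show "x \<otimes>\<^bsub>semidirect_int G \<phi>\<^esub> y \<in> carrier (semidirect_int G \<phi>)"
      by (auto simp: semidirect_int_def cl)
  next
    show "\<one>\<^bsub>semidirect_int G \<phi>\<^esub> \<in> carrier (semidirect_int G \<phi>)" by (simp add: semidirect_int_def)
  next
    fix x y z assume "x \<in> carrier (semidirect_int G \<phi>)" "y \<in> carrier (semidirect_int G \<phi>)" "z \<in> carrier (semidirect_int G \<phi>)"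
    then show "x \<otimes>\<^bsub>semidirect_int G \<phi>\<^esub> y \<otimes>\<^bsub>semidirect_int G \<phi>\<^esub> z =
          x \<otimes>\<^bsub>semidirect_int G \<phi>\<^esub> (y \<otimes>\<^bsub>semidirect_int G \<phi>\<^esub> z)"
      by (auto simp: semidirect_int_def cl hm comp G.m_assoc add.assoc)
  next
    fix x assume "x \<in> carrier (semidirect_int G \<phi>)"
    then show "\<one>\<^bsub>semidirect_int G \<phi>\<^esub> \<otimes>\<^bsub>semidirect_int G \<phi>\<^esub> x = x"
      by (auto simp: semidirect_int_def zero)
  next
    fix x assume x: "x \<in> carrier (semidirect_int G \<phi>)"
    then obtain g a where g: "x = (g, a)" "g \<in> carrier G" by (auto simp: semidirect_int_def)
    have "(\<phi> (-a) (inv\<^bsub>G\<^esub> g), -a) \<otimes>\<^bsub>semidirect_int G \<phi>\<^esub> x = \<one>\<^bsub>semidirect_int G \<phi>\<^esub>"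
      using g by (simp add: semidirect_int_def comp hm[symmetric] one)
    moreover have "(\<phi> (-a) (inv\<^bsub>G\<^esub> g), -a) \<in> carrier (semidirect_int G \<phi>)"
      using g by (simp add: semidirect_int_def cl)
    ultimately show "\<exists>y\<in>carrier (semidirect_int G \<phi>). y \<otimes>\<^bsub>semidirect_int G \<phi>\<^esub> x = \<one>\<^bsub>semidirect_int G \<phi>\<^esub>"
      by blast
  qed
qed


lemma shift_append[simp]: "shift_word n a (u @ v) = shift_word n a u @ shift_word n a v"
  by (simp add: shift_word_def)

lemma shift_Nil[simp]: "shift_word n a [] = []"
  by (simp add: shift_word_def)

lemma shift_Cons[simp]: "shift_word n a ((x,e) # v) = (idx n (int x + a), e) # shift_word n a v"
  by (simp add: shift_word_def)

lemma idx_idx: "0 < n \<Longrightarrow> idx n (int (idx n z) + a) = idx n (z + a)"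
  by (simp add: int_idx idx_def mod_simps)

lemma shift_shift: "0 < n \<Longrightarrow> shift_word n a (shift_word n b w) = shift_word n (b + a) w"
  by (induction w) (auto simp: idx_idx add.assoc)

lemma shift_mod: "z mod int n = z' mod int n \<Longrightarrow> shift_word n z w = shift_word n z' w"
  unfolding shift_word_def idx_def by (metis mod_add_right_eq)

lemma shift_zero: "w \<in> words {..<n} \<Longrightarrow> shift_word n 0 w = w"
  by (induction w) (auto simp: idx_nat)

lemma shift_step:
  assumes n: "0 < n" and uv: "(u,v) \<in> pres_step {..<n} (Rc n w)"
  shows "(shift_word n a u, shift_word n a v) \<in> pres_step {..<n} (Rc n w)"
proof -
  from uv obtain a0 b0 s where u: "u = a0@b0" and v: "v = a0@s@b0" and
    w: "a0@b0 \<in> words {..<n}" "s \<in> words {..<n}"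
    "s \<in> Rc n w \<or> (\<exists>x\<in>{..<n}. \<exists>e. s = [(x, e), (x, \<not> e)])"
    by (auto simp: pres_step_def)
  have s': "shift_word n a s \<in> Rc n w \<or> (\<exists>x\<in>{..<n}. \<exists>e. shift_word n a s = [(x, e), (x, \<not> e)])"
    using w(3)
  proof
    assume "s \<in> Rc n w"
    then obtain j where j: "s = shift_word n (int j) w" by blast
    have "shift_word n a s = shift_word n (int (idx n (int j + a))) w"
      using j shift_shift[OF n] shift_mod[of "int j + a" n "int (idx n (int j + a))"] int_idx[OF n] by simp
    then have "shift_word n a s \<in> Rc n w" using idx_lt[OF n] by blast
    then show ?thesis by blast
  next
    assume "\<exists>x\<in>{..<n}. \<exists>e. s = [(x, e), (x, \<not> e)]"
    then obtain x e where "s = [(x, e), (x, \<not> e)]" by blast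
    then have "shift_word n a s = [(idx n (int x + a), e), (idx n (int x + a), \<not> e)]" by simp
    then show ?thesis using idx_lt[OF n] by blast
  qed
  show ?thesis unfolding pres_step_def
    apply (rule CollectI, rule exI[of _ "shift_word n a a0"], rule exI[of _ "shift_word n a b0"],
        rule exI[of _ "shift_word n a s"])
    using u v s' shift_words[OF n] by auto
qed

lemma shift_pres_eq:
  assumes n: "0 < n" and uv: "(u,v) \<in> pres_eq {..<n} (Rc n w)"
  shows "(shift_word n a u, shift_word n a v) \<in> pres_eq {..<n} (Rc n w)"
proof -
  have "(u,v) \<in> (Sy {..<n} (Rc n w))\<^sup>*" using uv by (simp add: pres_eq_def)
  then have "(shift_word n a u, shift_word n a v) \<in> (Sy {..<n} (Rc n w))\<^sup>*"
  proof (induction rule: rtrancl_induct)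
    case base then show ?case by simp
  next
    case (step y z)
    then have "(shift_word n a y, shift_word n a z) \<in> Sy {..<n} (Rc n w)"
      using shift_step[OF n] by blast
    then show ?case using step by (meson rtrancl.rtrancl_into_rtrancl)
  qed
  then show ?thesis using shift_words[OF n] by (simp add: pres_eq_def)
qed

lemma cyc_shift_cls:
  assumes n: "0 < n" and w: "v \<in> words {..<n}"
  shows "cyc_shift n w a (cls {..<n} (Rc n w) v) = cls {..<n} (Rc n w) (shift_word n a v)"
proof -
  have "(\<Union>u\<in>pres_eq {..<n} (Rc n w) `` {v}. pres_eq {..<n} (Rc n w) `` {shift_word n a u})
      = pres_eq {..<n} (Rc n w) `` {shift_word n a v}"
  proof
    show "(\<Union>u\<in>pres_eq {..<n} (Rc n w) `` {v}. pres_eq {..<n} (Rc n w) `` {shift_word n a u})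
      \<subseteq> pres_eq {..<n} (Rc n w) `` {shift_word n a v}"
      using shift_pres_eq[OF n] pres_eq_trans by blast
    have "v \<in> pres_eq {..<n} (Rc n w) `` {v}" using w pres_eq_refl by auto
    then show "pres_eq {..<n} (Rc n w) `` {shift_word n a v} \<subseteq>
       (\<Union>u\<in>pres_eq {..<n} (Rc n w) `` {v}. pres_eq {..<n} (Rc n w) `` {shift_word n a u})" by blast
  qed
  then show ?thesis by (simp add: cyc_shift_def cls_def)
qed

lemma cyc_carrier: "carrier (cyc_group n w) = cls {..<n} (Rc n w) ` words {..<n}"
  by (simp add: cyc_group_def pres_carrier)

lemma cyc_carrierE: "A \<in> carrier (cyc_group n w) \<Longrightarrow> (\<And>v. v \<in> words {..<n} \<Longrightarrow> A = cls {..<n} (Rc n w) v \<Longrightarrow> P) \<Longrightarrow> P"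
  using cyc_carrier by blast

lemma cyc_mult: "u \<in> words {..<n} \<Longrightarrow> v \<in> words {..<n} \<Longrightarrow>
   cls {..<n} (Rc n w) u \<otimes>\<^bsub>cyc_group n w\<^esub> cls {..<n} (Rc n w) v = cls {..<n} (Rc n w) (u @ v)"
  by (simp add: cyc_group_def pres_mult)

lemma cyc_one: "\<one>\<^bsub>cyc_group n w\<^esub> = cls {..<n} (Rc n w) []"
  by (simp add: cyc_group_def pres_one)

lemma cyc_shift_hom: "0 < n \<Longrightarrow> cyc_shift n w a \<in> hom (cyc_group n w) (cyc_group n w)"
  apply (rule homI)
  apply (auto elim!: cyc_carrierE simp: cyc_shift_cls cyc_mult shift_words)
  apply (simp add: cyc_group_def shift_words)
  done

lemma cyc_shift_one: "0 < n \<Longrightarrow> cyc_shift n w a \<one>\<^bsub>cyc_group n w\<^esub> = \<one>\<^bsub>cyc_group n w\<^esub>"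
  by (simp add: cyc_one cyc_shift_cls)

lemma cyc_shift_comp: "0 < n \<Longrightarrow> x \<in> carrier (cyc_group n w) \<Longrightarrow>
   cyc_shift n w a (cyc_shift n w b x) = cyc_shift n w (a + b) x"
  by (auto elim!: cyc_carrierE simp: cyc_shift_cls shift_words shift_shift add.commute)

lemma cyc_shift_zero: "0 < n \<Longrightarrow> x \<in> carrier (cyc_group n w) \<Longrightarrow> cyc_shift n w 0 x = x"
  by (auto elim!: cyc_carrierE simp: cyc_shift_cls shift_zero)

lemma cyc_shift_cgen: "0 < n \<Longrightarrow> cyc_shift n w a (cgen n w z) = cgen n w (z + a)"
  by (simp add: cgen_def gen_def cyc_shift_cls idx_lt idx_idx)

lemma hnn_group: "0 < n \<Longrightarrow> group (cyc_hnn n w)"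
  unfolding cyc_hnn_def
  by (rule semidirect_group[OF cyc_is_group cyc_shift_hom cyc_shift_one cyc_shift_comp cyc_shift_zero])


lemma cyc_H_rel:
  fixes n k :: nat and m :: int
  assumes n: "0 < n"
  shows "cgen n (H_word n m (int k)) a \<otimes>\<^bsub>cyc_group n (H_word n m (int k))\<^esub> cgen n (H_word n m (int k)) (a + m)
       = cgen n (H_word n m (int k)) (a + int k)"
proof -
  define wH where "wH = H_word n m (int k)"
  let ?GH = "cyc_group n wH"
  interpret GH: group ?GH by (rule cyc_is_group)
  define V where "V = cgen n wH"
  have Vc: "\<And>z. V z \<in> carrier ?GH" and Vp: "per n V" using n by (auto simp: V_def cgen_per)
  have "V (1 + (a - 1)) \<otimes>\<^bsub>?GH\<^esub> V (1 + m + (a - 1)) \<otimes>\<^bsub>?GH\<^esub> inv\<^bsub>?GH\<^esub> (V (1 + int k + (a - 1))) = \<one>\<^bsub>?GH\<^esub>"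
    using cyc_rel[OF n, of wH "a - 1"] GH.ev_H[OF n Vp Vc, of "a - 1" m "int k"] unfolding V_def wH_def by simp
  then have "V a \<otimes>\<^bsub>?GH\<^esub> V (a + m) \<otimes>\<^bsub>?GH\<^esub> inv\<^bsub>?GH\<^esub> (V (a + int k)) = \<one>\<^bsub>?GH\<^esub>"
    by (simp add: algebra_simps)
  then have "V a \<otimes>\<^bsub>?GH\<^esub> V (a + m) = V (a + int k)"
    using GH.inv_solve_right'[of "\<one>\<^bsub>?GH\<^esub>" "V a \<otimes>\<^bsub>?GH\<^esub> V (a + m)" "V (a + int k)"] Vc
    by simp
  then show ?thesis by (simp add: V_def wH_def)
qed

locale P2 =
  fixes n m k :: nat
  assumes n: "0 < n" and k: "1 \<le> k"
begin

definition "wH = H_word n (int m) (int k)"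
abbreviation "GG \<equiv> cyc_group n wH"
abbreviation "SD \<equiv> cyc_hnn n wH"
definition "V = cgen n wH"
definition "v z = (V z, 0::int)"
definition "t = (\<one>\<^bsub>GG\<^esub>, 1::int)"

lemma GG_group: "group GG" by (rule cyc_is_group)
lemma SD_group: "group SD" using n by (rule hnn_group)

sublocale GG: group GG by (rule GG_group)
sublocale SD: group SD by (rule SD_group)

lemma Vc[simp]: "V z \<in> carrier GG" using n by (simp add: V_def)
lemma Vp: "per n V" by (simp add: V_def cgen_per)

lemma sd_mult: "(g, a) \<otimes>\<^bsub>SD\<^esub> (h, b) = (g \<otimes>\<^bsub>GG\<^esub> cyc_shift n wH a h, a + b)"
  by (simp add: cyc_hnn_def semidirect_int_def)
lemma sd_one: "\<one>\<^bsub>SD\<^esub> = (\<one>\<^bsub>GG\<^esub>, 0)"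
  by (simp add: cyc_hnn_def semidirect_int_def)
lemma sd_carrier: "carrier SD = carrier GG \<times> UNIV"
  by (simp add: cyc_hnn_def semidirect_int_def)

lemma vc[simp]: "v z \<in> carrier SD" by (simp add: v_def sd_carrier)
lemma tc[simp]: "t \<in> carrier SD" by (simp add: t_def sd_carrier)

lemma phi_one: "cyc_shift n wH a \<one>\<^bsub>GG\<^esub> = \<one>\<^bsub>GG\<^esub>" using n by (rule cyc_shift_one)
lemma phi_zero: "x \<in> carrier GG \<Longrightarrow> cyc_shift n wH 0 x = x" using n by (rule cyc_shift_zero)
lemma phi_V: "cyc_shift n wH a (V z) = V (z + a)" using n by (simp add: V_def cyc_shift_cgen)
lemma phi_closed: "x \<in> carrier GG \<Longrightarrow> cyc_shift n wH a x \<in> carrier GG"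
  using cyc_shift_hom[OF n] by (auto simp: hom_def)

lemma relH: "V a \<otimes>\<^bsub>GG\<^esub> V (a + int m) = V (a + int k)"
  using cyc_H_rel[OF n, of "int m" k a] by (simp add: V_def wH_def)

lemma v_mult: "v a \<otimes>\<^bsub>SD\<^esub> v b = (V a \<otimes>\<^bsub>GG\<^esub> V b, 0)"
  by (simp add: v_def sd_mult phi_zero)

lemma relv: "v a \<otimes>\<^bsub>SD\<^esub> v (a + int m) = v (a + int k)"
  by (simp only: v_mult) (simp add: relH v_def)

lemma t_v: "t \<otimes>\<^bsub>SD\<^esub> v z = v (z + 1) \<otimes>\<^bsub>SD\<^esub> t"
  by (simp add: t_def v_def sd_mult phi_V phi_one phi_zero)

lemma cj_t_v: "cj SD t (v (z + 1)) = v z"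
  using t_v[of z] by (simp add: SD.cj_iff)

lemma cj_t_f: "cj SD t (v (- j)) = v (- (j + 1))"
  using cj_t_v[of "- (j + 1)"] by simp

lemma cj_tpow_v: "cj SD (t [^]\<^bsub>SD\<^esub> (r::nat)) (v y) = v (y - int r)"
  using SD.cj_shift_nat[where f="\<lambda>j. v (- j)" and T=t and j="- y" and r=r] cj_t_f by simp

lemma t_pow_nat: "t [^]\<^bsub>SD\<^esub> (r::nat) = (\<one>\<^bsub>GG\<^esub>, int r)"
  by (induction r) (simp_all add: sd_one t_def sd_mult phi_one)

lemma t_pow_int: "t [^]\<^bsub>SD\<^esub> (z::int) = (\<one>\<^bsub>GG\<^esub>, z)"
proof (cases "z \<ge> 0")
  case True
  then obtain r where "z = int r" by (metis nonneg_eq_int)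
  then show ?thesis by (simp add: int_pow_int t_pow_nat)
next
  case False
  then obtain r where z: "z = - int r" by (metis nonpos_int_cases linorder_linear)
  have "(\<one>\<^bsub>GG\<^esub>, - int r) \<otimes>\<^bsub>SD\<^esub> t [^]\<^bsub>SD\<^esub> r = \<one>\<^bsub>SD\<^esub>"
    by (simp add: t_pow_nat sd_mult phi_one sd_one)
  then have "inv\<^bsub>SD\<^esub> (t [^]\<^bsub>SD\<^esub> r) = (\<one>\<^bsub>GG\<^esub>, - int r)"
    by (intro SD.inv_equality) (auto simp: sd_carrier t_pow_nat)
  then show ?thesis using z by (simp add: SD.int_pow_neg_int)
qed

lemma sd_split: "g \<in> carrier GG \<Longrightarrow> (g, a) = (g, 0) \<otimes>\<^bsub>SD\<^esub> t [^]\<^bsub>SD\<^esub> a"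
  by (simp add: t_pow_int sd_mult phi_one)

lemma emb_hom: "(\<lambda>g. (g, 0::int)) \<in> hom GG SD"
  by (rule homI) (simp_all add: sd_carrier sd_mult phi_zero)

lemma v_per: "v (z mod int n) = v z"
  using Vp by (simp add: v_def per_def)

lemma v_eq: "z mod int n = z' mod int n \<Longrightarrow> v z = v z'"
  by (metis v_per)

end


context P2
begin

definition "VV = Gamma_V n k"
definition "RR = {[(Gamma_label n (int m) (int k) e, False), (Gamma_init n e, True),
      (Gamma_label n (int m) (int k) e, True), (Gamma_term n k e, False)] | e. e \<in> Gamma_E n k}"
abbreviation "LL \<equiv> pres_group VV RR"

lemma LL_eq: "Gamma_LOG_group n (int m) k = LL"
  by (simp add: Gamma_LOG_group_def LOG_group_def VV_def RR_def)

sublocale LL: group LL by (rule pres_group_is_group)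

definition "ag j = gen VV RR (Inl (idx n j))"
definition "T = gen VV RR (Inr 0)"
definition "tt j = gen VV RR (Inr j)"
definition "c = int m - int k + 1"
definition "A = ag c"

lemma VV_Inl[simp]: "Inl i \<in> VV \<longleftrightarrow> i < n" by (auto simp: VV_def Gamma_V_def)
lemma VV_Inr[simp]: "Inr j \<in> VV \<longleftrightarrow> j < k" by (auto simp: VV_def Gamma_V_def)

lemma agc[simp]: "ag j \<in> carrier LL" using n by (simp add: ag_def idx_lt)
lemma Tc[simp]: "T \<in> carrier LL" using k by (simp add: T_def)
lemma Ac[simp]: "A \<in> carrier LL" by (simp add: A_def)

lemma log_rel:
  assumes e: "e \<in> Gamma_E n k"
  shows "cj LL (gen VV RR (Gamma_label n (int m) (int k) e)) (gen VV RR (Gamma_init n e))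
       = gen VV RR (Gamma_term n k e)"
proof -
  let ?l = "Gamma_label n (int m) (int k) e" and ?s = "Gamma_init n e" and ?t = "Gamma_term n k e"
  have mem: "?l \<in> VV" "?s \<in> VV" "?t \<in> VV"
    using e k n by (auto simp: Gamma_E_def Gamma_label_def Gamma_init_def Gamma_term_def idx_lt)
  have r: "[(?l, False), (?s, True), (?l, True), (?t, False)] \<in> RR" using e by (auto simp: RR_def)
  have "ev LL (gen VV RR) [(?l, False), (?s, True), (?l, True), (?t, False)] = \<one>\<^bsub>LL\<^esub>"
    by (rule rel_one[OF r]) (use mem in simp)
  then show ?thesis using LL.ev_log_rel[of "gen VV RR"] mem by simp
qed

lemma ag_per: "ag (z mod int n) = ag z" by (simp add: ag_def)
lemma ag_nat: "i < n \<Longrightarrow> ag (int i) = gen VV RR (Inl i)" by (simp add: ag_def idx_nat)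

lemma L1: "cj LL T (ag j) = ag (j + 1)"
proof -
  have "Inl (idx n j) \<in> Gamma_E n k" using n by (simp add: Gamma_E_def idx_lt)
  from log_rel[OF this] show ?thesis
    using n by (simp add: Gamma_label_def Gamma_init_def Gamma_term_def ag_def T_def idx_idx)
qed

lemma L2: "j + 1 < k \<Longrightarrow> cj LL A (tt j) = tt (j + 1)"
proof -
  assume j: "j + 1 < k"
  have "Inr j \<in> Gamma_E n k" using j by (simp add: Gamma_E_def)
  from log_rel[OF this] show ?thesis
    using j by (simp add: Gamma_label_def Gamma_init_def Gamma_term_def A_def ag_def tt_def c_def)
qed

lemma L3: "cj LL A (tt (k - 1)) = ag 1"
proof -
  have "Inr (k - 1) \<in> Gamma_E n k" using k by (simp add: Gamma_E_def)
  from log_rel[OF this] show ?thesis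
    using k by (simp add: Gamma_label_def Gamma_init_def Gamma_term_def A_def ag_def tt_def c_def)
qed

lemma tt_eq: "j < k \<Longrightarrow> tt j = cj LL (A [^]\<^bsub>LL\<^esub> j) T"
proof (induction j)
  case 0 then show ?case by (simp add: tt_def T_def)
next
  case (Suc j)
  then have "tt (Suc j) = cj LL A (tt j)" using L2[of j] by simp
  also have "\<dots> = cj LL (A [^]\<^bsub>LL\<^esub> Suc j) T" using Suc by (simp add: LL.cj_cj)
  finally show ?case .
qed

lemma a1: "ag 1 = cj LL (A [^]\<^bsub>LL\<^esub> k) T"
proof -
  have "ag 1 = cj LL A (cj LL (A [^]\<^bsub>LL\<^esub> (k - 1)) T)" using L3 tt_eq[of "k - 1"] k by simp
  also have "\<dots> = cj LL (A [^]\<^bsub>LL\<^esub> Suc (k - 1)) T" by (simp add: LL.cj_cj)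
  finally show ?thesis using k by simp
qed

lemma shT: "cj LL (T [^]\<^bsub>LL\<^esub> (z::int)) (ag j) = ag (j + z)"
  by (rule LL.cj_shift_int[where f=ag, OF Tc agc L1])

definition "P j = ag j [^]\<^bsub>LL\<^esub> k"
definition "K = T [^]\<^bsub>LL\<^esub> k"
definition "Vh z = P (int m - z) \<otimes>\<^bsub>LL\<^esub> inv\<^bsub>LL\<^esub> K"

lemma Pc[simp]: "P j \<in> carrier LL" by (simp add: P_def)
lemma Kc[simp]: "K \<in> carrier LL" by (simp add: K_def)
lemma Vhc[simp]: "Vh z \<in> carrier LL" by (simp add: Vh_def)

lemma shP: "cj LL (T [^]\<^bsub>LL\<^esub> (z::int)) (P j) = P (j + z)"
  by (simp add: P_def LL.cj_pow shT)

lemma shTT: "cj LL (T [^]\<^bsub>LL\<^esub> (z::int)) (T [^]\<^bsub>LL\<^esub> (w::int)) = T [^]\<^bsub>LL\<^esub> w"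
proof -
  have "T [^]\<^bsub>LL\<^esub> w \<otimes>\<^bsub>LL\<^esub> T [^]\<^bsub>LL\<^esub> z = T [^]\<^bsub>LL\<^esub> z \<otimes>\<^bsub>LL\<^esub> T [^]\<^bsub>LL\<^esub> w"
    by (simp add: LL.int_pow_mult[symmetric] add.commute)
  then show ?thesis by (simp add: LL.cj_iff)
qed

lemma shK: "cj LL (T [^]\<^bsub>LL\<^esub> (z::int)) K = K"
  using shTT[of z "int k"] by (simp add: K_def int_pow_int)

lemma shT1: "cj LL (T [^]\<^bsub>LL\<^esub> (z::int)) T = T"
  using shTT[of z 1] by simp

lemma shVh: "cj LL (T [^]\<^bsub>LL\<^esub> (s::int)) (Vh z) = Vh (z - s)"
  by (simp add: Vh_def LL.cj_mult LL.cj_inv shP shK algebra_simps)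

lemma Kinv: "inv\<^bsub>LL\<^esub> K = T [^]\<^bsub>LL\<^esub> (- int k)"
  by (simp add: K_def LL.int_pow_neg_int)

end


context P2
begin

lemma P_per: "P (z mod int n) = P z" by (simp add: P_def ag_per)

lemma base: "P c \<otimes>\<^bsub>LL\<^esub> P 1 \<otimes>\<^bsub>LL\<^esub> inv\<^bsub>LL\<^esub> K = P (c - int k)"
proof -
  have h: "cj LL (P c) K = P 1"
    by (simp add: P_def K_def a1 LL.cj_pow A_def)
  have e: "K \<otimes>\<^bsub>LL\<^esub> P c = P c \<otimes>\<^bsub>LL\<^esub> P 1" using LL.cj_iff[of "P c" K "P 1"] h by simp
  have "P c \<otimes>\<^bsub>LL\<^esub> P 1 \<otimes>\<^bsub>LL\<^esub> inv\<^bsub>LL\<^esub> K = K \<otimes>\<^bsub>LL\<^esub> P c \<otimes>\<^bsub>LL\<^esub> inv\<^bsub>LL\<^esub> K"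
    by (simp add: e)
  also have "\<dots> = cj LL (inv\<^bsub>LL\<^esub> K) (P c)" by (simp add: cj_def)
  also have "\<dots> = P (c - int k)" by (simp add: Kinv shP)
  finally show ?thesis .
qed

lemma base_shift: "P (c + s) \<otimes>\<^bsub>LL\<^esub> P (1 + s) \<otimes>\<^bsub>LL\<^esub> inv\<^bsub>LL\<^esub> K = P (c - int k + s)"
proof -
  have "cj LL (T [^]\<^bsub>LL\<^esub> s) (P c \<otimes>\<^bsub>LL\<^esub> P 1 \<otimes>\<^bsub>LL\<^esub> inv\<^bsub>LL\<^esub> K) = P (c - int k + s)"
    by (simp add: base shP)
  then show ?thesis by (simp add: LL.cj_mult LL.cj_inv shP shK)
qed

lemma VhRel: "Vh x \<otimes>\<^bsub>LL\<^esub> Vh (x + int m) = Vh (x + int k)"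
proof -
  have ck: "cj LL K (P (- x)) = P (- x + int k)"
    using shP[of "int k" "- x"] by (simp add: K_def int_pow_int)
  then have e: "inv\<^bsub>LL\<^esub> K \<otimes>\<^bsub>LL\<^esub> P (- x) = P (- x + int k) \<otimes>\<^bsub>LL\<^esub> inv\<^bsub>LL\<^esub> K"
    by (simp add: cj_def LL.inv_solve_right)
  have "Vh x \<otimes>\<^bsub>LL\<^esub> Vh (x + int m) = P (int m - x) \<otimes>\<^bsub>LL\<^esub> (inv\<^bsub>LL\<^esub> K \<otimes>\<^bsub>LL\<^esub> P (- x)) \<otimes>\<^bsub>LL\<^esub> inv\<^bsub>LL\<^esub> K"
    by (simp add: Vh_def LL.m_assoc)
  also have "\<dots> = P (int m - x) \<otimes>\<^bsub>LL\<^esub> P (- x + int k) \<otimes>\<^bsub>LL\<^esub> inv\<^bsub>LL\<^esub> K \<otimes>\<^bsub>LL\<^esub> inv\<^bsub>LL\<^esub> K"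
    by (simp add: e LL.m_assoc)
  also have "P (int m - x) \<otimes>\<^bsub>LL\<^esub> P (- x + int k) \<otimes>\<^bsub>LL\<^esub> inv\<^bsub>LL\<^esub> K = P (int m - x - int k)"
    using base_shift[of "int k - 1 - x"] by (simp add: c_def algebra_simps)
  also have "P (int m - x - int k) \<otimes>\<^bsub>LL\<^esub> inv\<^bsub>LL\<^esub> K = Vh (x + int k)"
    by (simp add: Vh_def algebra_simps)
  finally show ?thesis .
qed

lemma Vh_per: "per n Vh"
  unfolding per_def
proof
  fix z
  have "P (int m - z mod int n) = P (int m - z)"
    by (metis P_per mod_diff_right_eq)
  then show "Vh (z mod int n) = Vh z" by (simp add: Vh_def)
qed

definition "psi = phom LL (\<lambda>i. Vh (int i))"

lemma psi: "psi \<in> hom GG LL" "\<And>z. psi (V z) = Vh z"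
proof -
  have r: "ev LL (\<lambda>i. Vh (int i)) (shift_word n j wH) = \<one>\<^bsub>LL\<^esub>" for j
  proof -
    have "ev LL (\<lambda>i. Vh (int i)) (shift_word n j wH) =
        Vh (1 + j) \<otimes>\<^bsub>LL\<^esub> Vh (1 + int m + j) \<otimes>\<^bsub>LL\<^esub> inv\<^bsub>LL\<^esub> (Vh (1 + int k + j))"
      unfolding wH_def by (rule LL.ev_H[OF n Vh_per Vhc])
    also have "\<dots> = \<one>\<^bsub>LL\<^esub>" using VhRel[of "1 + j"] by (simp add: algebra_simps)
    finally show ?thesis .
  qed
  show "psi \<in> hom GG LL" "\<And>z. psi (V z) = Vh z"
    using cyc_hom[OF n LL.is_group Vh_per Vhc r] unfolding psi_def V_def by auto
qed

definition "B = cj SD (v (- c)) t"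
definition "ph (x :: nat + nat) = (case x of Inl i \<Rightarrow> cj SD (v (- int i)) t | Inr j \<Rightarrow> cj SD (B [^]\<^bsub>SD\<^esub> (j::nat)) t)"

lemma Bc[simp]: "B \<in> carrier SD" by (simp add: B_def)
lemma phc[simp]: "ph x \<in> carrier SD" by (simp add: ph_def split: sum.split)

lemma ph_idx: "ph (Inl (idx n j)) = cj SD (v (- j)) t"
proof -
  have "v (- int (idx n j)) = v (- j)"
    by (rule v_eq) (simp add: int_idx[OF n] mod_simps)
  then show ?thesis by (simp add: ph_def)
qed

lemma ph_B: "ph (Inl (idx n c)) = B" by (simp add: ph_idx B_def)

lemma cj_t_t_pow: "cj SD (t [^]\<^bsub>SD\<^esub> (r::nat)) t = t"
proof -
  have "t \<otimes>\<^bsub>SD\<^esub> t [^]\<^bsub>SD\<^esub> r = t [^]\<^bsub>SD\<^esub> r \<otimes>\<^bsub>SD\<^esub> t"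
    by (simp add: SD.nat_pow_Suc2[symmetric])
  then show ?thesis by (simp add: SD.cj_iff)
qed

lemma ph_rel: "e \<in> Gamma_E n k \<Longrightarrow>
   cj SD (ph (Gamma_label n (int m) (int k) e)) (ph (Gamma_init n e)) = ph (Gamma_term n k e)"
proof -
  assume e: "e \<in> Gamma_E n k"
  show ?thesis
  proof (cases e)
    case (Inl i)
    have "cj SD t (v (- int i)) = v (- int i - 1)" using cj_t_v[of "- int i - 1"] by simp
    then have vt: "v (- int i) \<otimes>\<^bsub>SD\<^esub> t = t \<otimes>\<^bsub>SD\<^esub> v (- int i - 1)" by (simp add: SD.cj_iff)
    have "cj SD t (cj SD (v (- int i)) t) = cj SD (v (- int i) \<otimes>\<^bsub>SD\<^esub> t) t" by (simp add: SD.cj_cj)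
    also have "\<dots> = cj SD (v (- int i - 1)) (cj SD t t)" using SD.cj_cj[of "v (- int i - 1)" t t] vt by simp
    also have "\<dots> = cj SD (v (- (int i + 1))) t" by simp
    finally show ?thesis using Inl ph_idx[of "int i + 1"]
      by (simp add: Gamma_label_def Gamma_init_def Gamma_term_def ph_def B_def)
  next
    case (Inr j)
    have jk: "j < k" using e Inr by (auto simp: Gamma_E_def)
    have lab: "ph (Gamma_label n (int m) (int k) e) = B"
      using Inr ph_B by (simp add: Gamma_label_def c_def)
    have "cj SD B (cj SD (B [^]\<^bsub>SD\<^esub> j) t) = cj SD (B [^]\<^bsub>SD\<^esub> Suc j) t"
      by (simp add: SD.cj_cj)
    show ?thesis
    proof (cases "j + 1 < k")
      case True
      then show ?thesis using Inr lab \<open>cj SD B (cj SD (B [^]\<^bsub>SD\<^esub> j) t) = cj SD (B [^]\<^bsub>SD\<^esub> Suc j) t\<close>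
        by (simp add: Gamma_init_def Gamma_term_def ph_def)
    next
      case False
      then have jk1: "Suc j = k" using jk by simp
      have Bk: "B [^]\<^bsub>SD\<^esub> k = cj SD (v (- c)) (t [^]\<^bsub>SD\<^esub> k)" by (simp add: B_def SD.cj_pow)
      have "cj SD (B [^]\<^bsub>SD\<^esub> k) t = cj SD (v (- c)) (cj SD (t [^]\<^bsub>SD\<^esub> k) (cj SD (inv\<^bsub>SD\<^esub> (v (- c))) t))"
        by (simp add: Bk SD.cj_cj2)
      also have "cj SD (t [^]\<^bsub>SD\<^esub> k) (cj SD (inv\<^bsub>SD\<^esub> (v (- c))) t) = cj SD (inv\<^bsub>SD\<^esub> (v (- c - int k))) t"
        by (simp add: SD.cj_dist SD.cj_inv cj_tpow_v cj_t_t_pow)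
      also have "cj SD (v (- c)) (cj SD (inv\<^bsub>SD\<^esub> (v (- c - int k))) t) =
           cj SD (inv\<^bsub>SD\<^esub> (v (- c - int k)) \<otimes>\<^bsub>SD\<^esub> v (- c)) t"
        by (simp add: SD.cj_cj)
      also have "inv\<^bsub>SD\<^esub> (v (- c - int k)) \<otimes>\<^bsub>SD\<^esub> v (- c) = v (- 1)"
      proof -
        have "v (- c - int k) \<otimes>\<^bsub>SD\<^esub> v (- 1) = v (- c)"
          using relv[of "- c - int k"] by (simp add: c_def algebra_simps)
        then show ?thesis by (simp add: SD.inv_solve_left')
      qed
      finally have "cj SD (B [^]\<^bsub>SD\<^esub> k) t = cj SD (v (- 1)) t" .
      then show ?thesis using Inr lab jk1 \<open>cj SD B (cj SD (B [^]\<^bsub>SD\<^esub> j) t) = cj SD (B [^]\<^bsub>SD\<^esub> Suc j) t\<close>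
          ph_idx[of 1]
        by (simp add: Gamma_init_def Gamma_term_def ph_def)
    qed
  qed
qed

definition "Phi = phom SD ph"

lemma Phi: "Phi \<in> hom LL SD" "\<And>x. x \<in> VV \<Longrightarrow> Phi (gen VV RR x) = ph x"
proof -
  have f: "ph ` VV \<subseteq> carrier SD" by auto
  have r: "ev SD ph r = \<one>\<^bsub>SD\<^esub>" if rR: "r \<in> RR" and "r \<in> words VV" for r
  proof -
    obtain e where e: "e \<in> Gamma_E n k" and r: "r = [(Gamma_label n (int m) (int k) e, False), (Gamma_init n e, True),
      (Gamma_label n (int m) (int k) e, True), (Gamma_term n k e, False)]"
      using rR unfolding RR_def by blast
    show ?thesis unfolding r using SD.ev_log_rel[of ph] ph_rel[OF e] by simp
  qed
  show "Phi \<in> hom LL SD" unfolding Phi_def by (rule phom_hom[OF SD.is_group f r])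
  fix x assume x: "x \<in> VV"
  have wx: "[(x, True)] \<in> words VV" using x by (simp add: words_def)
  have "Phi (gen VV RR x) = ev SD ph [(x, True)]"
    unfolding Phi_def gen_def by (rule phom_cls[OF SD.is_group f r wx])
  then show "Phi (gen VV RR x) = ph x" by simp
qed

end


context P2
begin

definition "Psi (x :: nat word set \<times> int) = psi (fst x) \<otimes>\<^bsub>LL\<^esub> T [^]\<^bsub>LL\<^esub> (snd x)"

lemma psi_c[simp]: "g \<in> carrier GG \<Longrightarrow> psi g \<in> carrier LL"
  using psi(1) by (simp add: hom_in_carrier)

lemma psi_shift: "h \<in> carrier GG \<Longrightarrow> psi (cyc_shift n wH a h) = cj LL (T [^]\<^bsub>LL\<^esub> (- a)) (psi h)"
proof -
  assume h: "h \<in> carrier GG"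
  have h1: "psi \<circ> cyc_shift n wH a \<in> hom GG LL" using cyc_shift_hom[OF n] psi(1) by (rule hom_compose)
  have h2: "cj LL (T [^]\<^bsub>LL\<^esub> (- a)) \<circ> psi \<in> hom GG LL"
    using psi(1) LL.cj_hom[of "T [^]\<^bsub>LL\<^esub> (- a)"] by (simp add: hom_compose)
  have "(psi \<circ> cyc_shift n wH a) h = (cj LL (T [^]\<^bsub>LL\<^esub> (- a)) \<circ> psi) h"
  proof (rule cyc_hom_ext[OF n LL.is_group h1 h2 _ h])
    fix z
    show "(psi \<circ> cyc_shift n wH a) (cgen n wH z) = (cj LL (T [^]\<^bsub>LL\<^esub> (- a)) \<circ> psi) (cgen n wH z)"
      using phi_V[of a z] psi(2) shVh[of "- a" z] by (simp add: V_def[symmetric])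
  qed
  then show ?thesis by simp
qed

lemma Psi_hom: "Psi \<in> hom SD LL"
proof (rule homI)
  fix x assume "x \<in> carrier SD"
  then show "Psi x \<in> carrier LL" by (auto simp: Psi_def sd_carrier)
next
  fix x y assume "x \<in> carrier SD" "y \<in> carrier SD"
  then obtain g a h b where x: "x = (g, a)" "g \<in> carrier GG" and y: "y = (h, b)" "h \<in> carrier GG"
    by (auto simp: sd_carrier)
  interpret ps: group_hom GG LL psi using psi(1) by (simp add: group_hom_def group_hom_axioms_def)
  have "Psi (x \<otimes>\<^bsub>SD\<^esub> y) = psi g \<otimes>\<^bsub>LL\<^esub> cj LL (T [^]\<^bsub>LL\<^esub> (- a)) (psi h) \<otimes>\<^bsub>LL\<^esub> T [^]\<^bsub>LL\<^esub> (a + b)"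
    using x y phi_closed by (simp add: Psi_def sd_mult psi_shift)
  also have "\<dots> = Psi x \<otimes>\<^bsub>LL\<^esub> Psi y"
    using x y by (simp add: Psi_def cj_def LL.m_assoc LL.int_pow_mult LL.int_pow_neg)
  finally show "Psi (x \<otimes>\<^bsub>SD\<^esub> y) = Psi x \<otimes>\<^bsub>LL\<^esub> Psi y" .
qed

interpretation Ps: group_hom SD LL Psi using Psi_hom by (simp add: group_hom_def group_hom_axioms_def)
interpretation Ph: group_hom LL SD Phi using Phi(1) by (simp add: group_hom_def group_hom_axioms_def)

lemma Psi_v: "Psi (v z) = Vh z" by (simp add: Psi_def v_def psi(2))
lemma Psi_t: "Psi t = T"
proof -
  interpret ps: group_hom GG LL psi using psi(1) by (simp add: group_hom_def group_hom_axioms_def)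
  show ?thesis by (simp add: Psi_def t_def)
qed

lemma Psi_cj: "x \<in> carrier SD \<Longrightarrow> y \<in> carrier SD \<Longrightarrow> Psi (cj SD x y) = cj LL (Psi x) (Psi y)"
  by (simp add: cj_def)

lemma Phi_ag: "Phi (ag j) = cj SD (v (- j)) t"
  using Phi(2)[of "Inl (idx n j)"] n by (simp add: ag_def idx_lt ph_idx)

lemma Phi_T: "Phi T = t"
  using Phi(2)[of "Inr 0"] k by (simp add: T_def ph_def)

lemma PsiPhi_gen: "x \<in> VV \<Longrightarrow> Psi (Phi (gen VV RR x)) = gen VV RR x"
proof -
  have inl: "Psi (Phi (ag j)) = ag j" for j
  proof -
    have "Psi (Phi (ag j)) = cj LL (Vh (- j)) T" by (simp add: Phi_ag Psi_cj Psi_v Psi_t)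
    also have "\<dots> = cj LL (T [^]\<^bsub>LL\<^esub> (- int k)) (cj LL (P (int m + j)) T)"
      by (simp add: Vh_def LL.cj_cj Kinv[symmetric])
    also have "\<dots> = cj LL (P (int m + j - int k)) T"
      by (simp add: LL.cj_dist shP shT1)
    also have "\<dots> = cj LL (T [^]\<^bsub>LL\<^esub> (j - 1)) (ag 1)"
      by (simp add: a1 LL.cj_dist shP shT1 P_def[symmetric] A_def c_def algebra_simps)
    also have "\<dots> = ag j" by (simp add: shT)
    finally show ?thesis .
  qed
  assume x: "x \<in> VV"
  show ?thesis
  proof (cases x)
    case (Inl i)
    then have "i < n" using x by simp
    then show ?thesis using inl[of "int i"] Inl by (simp add: ag_nat)
  next
    case (Inr j)
    then have j: "j < k" using x by simp
    have "Psi B = A"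
      using inl[of c] Phi(2)[of "Inl (idx n c)"] n by (simp add: ph_B A_def ag_def idx_lt)
    then have "Psi (Phi (gen VV RR x)) = cj LL (A [^]\<^bsub>LL\<^esub> j) T"
      using Phi(2)[OF x] Inr by (simp add: ph_def Psi_cj Psi_t Ps.hom_nat_pow)
    then show ?thesis using tt_eq[OF j] Inr by (simp add: tt_def)
  qed
qed

lemma PhiPsi: "x \<in> carrier SD \<Longrightarrow> Phi (Psi x) = x"
proof -
  assume x: "x \<in> carrier SD"
  then obtain g a where ga: "x = (g, a)" "g \<in> carrier GG" by (auto simp: sd_carrier)
  have emb: "Phi (psi g) = (g, 0)"
  proof -
    have h1: "Phi \<circ> psi \<in> hom GG SD" using psi(1) Phi(1) by (rule hom_compose)
    have "(Phi \<circ> psi) g = (\<lambda>g. (g, 0::int)) g"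
    proof (rule cyc_hom_ext[OF n SD.is_group h1 emb_hom _ ga(2)])
      fix z
      have tk: "t [^]\<^bsub>SD\<^esub> k \<otimes>\<^bsub>SD\<^esub> v (z - int m) = v (z - int m + int k) \<otimes>\<^bsub>SD\<^esub> t [^]\<^bsub>SD\<^esub> k"
        using cj_tpow_v[of k "z - int m + int k"] by (simp add: SD.cj_iff)
      have rv: "v (z - int m) \<otimes>\<^bsub>SD\<^esub> v z = v (z - int m + int k)" using relv[of "z - int m"] by simp
      have "cj SD (v (z - int m)) (t [^]\<^bsub>SD\<^esub> k) = v z \<otimes>\<^bsub>SD\<^esub> t [^]\<^bsub>SD\<^esub> k"
        using tk rv by (simp add: SD.cj_iff SD.m_assoc[symmetric])
      then have "cj SD (v (z - int m)) (t [^]\<^bsub>SD\<^esub> k) \<otimes>\<^bsub>SD\<^esub> inv\<^bsub>SD\<^esub> (t [^]\<^bsub>SD\<^esub> k) = v z"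
        by (simp add: SD.m_assoc)
      moreover have "Phi (Vh z) = cj SD (v (z - int m)) (t [^]\<^bsub>SD\<^esub> k) \<otimes>\<^bsub>SD\<^esub> inv\<^bsub>SD\<^esub> (t [^]\<^bsub>SD\<^esub> k)"
        by (simp add: Vh_def P_def K_def Ph.hom_nat_pow Phi_ag Phi_T SD.cj_pow)
      ultimately show "(Phi \<circ> psi) (cgen n wH z) = (\<lambda>g. (g, 0::int)) (cgen n wH z)"
        using psi(2)[of z] by (simp add: V_def[symmetric] v_def)
    qed
    then show ?thesis by simp
  qed
  have "Phi (Psi x) = Phi (psi g) \<otimes>\<^bsub>SD\<^esub> Phi T [^]\<^bsub>SD\<^esub> a"
    using ga by (simp add: Psi_def Ph.hom_int_pow)
  also have "\<dots> = x" using ga by (simp add: emb Phi_T sd_split[symmetric])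
  finally show ?thesis .
qed

lemma part2: "SD \<cong> LL"
proof (rule group_isos[OF Psi_hom Phi(1)])
  fix x assume "x \<in> carrier SD" then show "Phi (Psi x) = x" by (rule PhiPsi)
next
  fix y assume y: "y \<in> carrier LL"
  have c: "Psi \<circ> Phi \<in> hom LL LL" using Phi(1) Psi_hom by (rule hom_compose)
  show "Psi (Phi y) = y" using hom_ext[OF LL.is_group c hom_id _ y] PsiPhi_gen by simp
qed

end

theorem corollary3p4:
  fixes n m k p :: nat
  assumes "n \<ge> 2" and "1 \<le> m" and "m \<le> n" and "1 \<le> k" and "k \<le> n"
    and "p \<le> n - 1" and "int p mod int n = (int k - int m - 1) mod int n"
  shows "H_group n (int m) (int k) \<cong> L_group n (replicate k (int p))
       \<and> cyc_hnn n (H_word n (int m) (int k)) \<cong> Gamma_LOG_group n (int m) k"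
proof
  have n: "0 < n" using assms(1) by simp
  show "H_group n (int m) (int k) \<cong> L_group n (replicate k (int p))"
    unfolding H_group_def L_group_def using part1[OF n, of p k "int m"] assms(7) by simp
  interpret P2 n m k using n assms(4) by unfold_locales
  show "cyc_hnn n (H_word n (int m) (int k)) \<cong> Gamma_LOG_group n (int m) k"
    using part2 by (simp add: LL_eq wH_def)
qed

end
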